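(* Let $G$ be a finite group with conjugacy classes $\mathcal{C}_1,\dots,\mathcal{C}_s$, and let $r\ge 2$ be a prime with $r\nmid |G|$. Let $g\in G\wr S_n$ have type $T(g)=(T(g)_{ij})_{s\times n}$. Then $g$ is an $r$-th power in $G\wr S_n$ if and only if $r\mid T(g)_{ij}$ whenever $r\mid j$.
   Context: $G\wr S_n$ is the set of pairs $(f,\pi)$ with $f:\{1,\dots,n\}\to G$ and $\pi\in S_n$, with product $(f,\pi)(f',\pi')=(ff'_\pi,\pi\pi')$, $f'_\pi(i)=f'(\pi^{-1}(i))$, pointwise product of functions. For $(f,\pi)$ and a cycle $(j,\pi(j),\dots,\pi^t(j))$ of $\pi$, its cycle product is $f(j)f(\pi^{-1}(j))\cdots f(\pi^{-t}(j))$; its conjugacy class is independent of the starting point. The type $T(g)$ of $g=(f,\pi)$ is the $s\times n$ matrix whose $(i,k)$ entry is the number of $k$-cycles of $\pi$ whose cycle product lies in $\mathcal{C}_i$. An element $g$ is an $r$-th power if $g=h^r$ for some $h\in G\wr S_n$. *)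

theory Defs
  imports "HOL-Algebra.Algebra" "HOL-Combinatorics.Permutations" "HOL-Computational_Algebra.Primes"
begin

definition conj_class :: "('a, 'b) monoid_scheme \<Rightarrow> 'a \<Rightarrow> 'a set" where
  "conj_class G x = {h \<otimes>\<^bsub>G\<^esub> x \<otimes>\<^bsub>G\<^esub> inv\<^bsub>G\<^esub> h | h. h \<in> carrier G}"

definition conj_classes :: "('a, 'b) monoid_scheme \<Rightarrow> 'a set set" where
  "conj_classes G = conj_class G ` carrier G"

text \<open>The wreath product G wr S_n: pairs (f, pi) with f : {1..n} -> G
  (extended by the identity outside {1..n}) and pi a permutation of {1..n};
  (f,pi)(f',pi') = (f f'_pi, pi pi') with f'_pi(i) = f'(pi^{-1} i) and
  (pi pi') = pi o pi'.\<close>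
definition wr_carrier :: "('a, 'b) monoid_scheme \<Rightarrow> nat \<Rightarrow> ((nat \<Rightarrow> 'a) \<times> (nat \<Rightarrow> nat)) set" where
  "wr_carrier G n = {(f, p). (\<forall>i\<in>{1..n}. f i \<in> carrier G) \<and>
                             (\<forall>i. i \<notin> {1..n} \<longrightarrow> f i = \<one>\<^bsub>G\<^esub>) \<and>
                             p permutes {1..n}}"

definition wr_mult :: "('a, 'b) monoid_scheme \<Rightarrow> (nat \<Rightarrow> 'a) \<times> (nat \<Rightarrow> nat) \<Rightarrow> (nat \<Rightarrow> 'a) \<times> (nat \<Rightarrow> nat) \<Rightarrow> (nat \<Rightarrow> 'a) \<times> (nat \<Rightarrow> nat)" where
  "wr_mult G x y = ((\<lambda>i. fst x i \<otimes>\<^bsub>G\<^esub> fst y (inv_into UNIV (snd x) i)), snd x \<circ> snd y)"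

definition wreath :: "('a, 'b) monoid_scheme \<Rightarrow> nat \<Rightarrow> ((nat \<Rightarrow> 'a) \<times> (nat \<Rightarrow> nat)) monoid" where
  "wreath G n = \<lparr> carrier = wr_carrier G n, monoid.mult = wr_mult G, monoid.one = (\<lambda>_. \<one>\<^bsub>G\<^esub>, id) \<rparr>"

definition cycle_prod :: "('a, 'b) monoid_scheme \<Rightarrow> (nat \<Rightarrow> 'a) \<Rightarrow> (nat \<Rightarrow> nat) \<Rightarrow> nat \<Rightarrow> nat \<Rightarrow> 'a" where
  "cycle_prod G f p j k = foldr (\<otimes>\<^bsub>G\<^esub>) (map (\<lambda>m. f ((inv_into UNIV p ^^ m) j)) [0..<k]) \<one>\<^bsub>G\<^esub>"

definition perm_cycle :: "(nat \<Rightarrow> nat) \<Rightarrow> nat \<Rightarrow> nat set" where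
  "perm_cycle p j = {(p ^^ m) j | m. True}"

definition wr_type :: "('a, 'b) monoid_scheme \<Rightarrow> nat \<Rightarrow> (nat \<Rightarrow> 'a) \<times> (nat \<Rightarrow> nat) \<Rightarrow> 'a set \<Rightarrow> nat \<Rightarrow> nat" where
  "wr_type G n g C k = card {c. \<exists>j\<in>{1..n}. c = perm_cycle (snd g) j \<and> card c = k \<and>
                                   cycle_prod G (fst g) (snd g) j k \<in> C}"

end

theory Submission
  imports Defs "HOL-Number_Theory.Cong"
begin

abbreviation pinv :: "(nat \<Rightarrow> nat) \<Rightarrow> nat \<Rightarrow> nat" where "pinv p \<equiv> inv_into UNIV p"

primrec PP :: "('a, 'b) monoid_scheme \<Rightarrow> (nat \<Rightarrow> 'a) \<Rightarrow> (nat \<Rightarrow> nat) \<Rightarrow> nat \<Rightarrow> nat \<Rightarrow> 'a" where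
  "PP G f q i 0 = \<one>\<^bsub>G\<^esub>"
| "PP G f q i (Suc m) = f i \<otimes>\<^bsub>G\<^esub> PP G f q (q i) m"

definition wrA :: "('a, 'b) monoid_scheme \<Rightarrow> nat set \<Rightarrow> ((nat \<Rightarrow> 'a) \<times> (nat \<Rightarrow> nat)) monoid" where
  "wrA G A = \<lparr> carrier = {(f, p). (\<forall>i\<in>A. f i \<in> carrier G) \<and>
                             (\<forall>i. i \<notin> A \<longrightarrow> f i = \<one>\<^bsub>G\<^esub>) \<and> p permutes A},
     monoid.mult = wr_mult G, monoid.one = (\<lambda>_. \<one>\<^bsub>G\<^esub>, id) \<rparr>"

lemma wreath_eq: "wreath G n = wrA G {1..n}"
  unfolding wreath_def wrA_def wr_carrier_def by simp

lemma wrA_mult: "x \<otimes>\<^bsub>wrA G A\<^esub> y = wr_mult G x y" by (simp add: wrA_def)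
lemma wrA_one: "\<one>\<^bsub>wrA G A\<^esub> = (\<lambda>_. \<one>\<^bsub>G\<^esub>, id)" by (simp add: wrA_def)
lemma wrA_carrier: "(f, p) \<in> carrier (wrA G A) \<longleftrightarrow> (\<forall>i\<in>A. f i \<in> carrier G) \<and>
                             (\<forall>i. i \<notin> A \<longrightarrow> f i = \<one>\<^bsub>G\<^esub>) \<and> p permutes A"
  by (simp add: wrA_def)

lemma wrA_pow_indep: "x [^]\<^bsub>wrA G A\<^esub> (m::nat) = x [^]\<^bsub>wrA G B\<^esub> m"
  by (simp add: nat_pow_def wrA_def)

context group
begin

lemma wrA_allc: "(f, p) \<in> carrier (wrA G A) \<Longrightarrow> f i \<in> carrier G"
  by (cases "i \<in> A") (auto simp: wrA_carrier)

lemma PP_closed: "(\<And>i. f i \<in> carrier G) \<Longrightarrow> PP G f q i m \<in> carrier G"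
  by (induction m arbitrary: i) auto

lemma PP_add: "(\<And>i. f i \<in> carrier G) \<Longrightarrow>
   PP G f q i (a + b) = PP G f q i a \<otimes> PP G f q ((q ^^ a) i) b"
proof (induction a arbitrary: i)
  case 0 then show ?case by (simp add: PP_closed)
next
  case (Suc a)
  then show ?case by (simp add: PP_closed m_assoc funpow_Suc_right del: funpow.simps)
qed

lemma PP_Suc2: "(\<And>i. f i \<in> carrier G) \<Longrightarrow>
   PP G f q i (Suc m) = PP G f q i m \<otimes> f ((q ^^ m) i)"
  using PP_add[of f q i m 1] by (simp add: PP_closed)

lemma PP_block: "(\<And>i. f i \<in> carrier G) \<Longrightarrow>
   PP G (\<lambda>i. PP G f q i r) (q ^^ r) j k = PP G f q j (r * k)"
proof (induction k arbitrary: j)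
  case 0 then show ?case by simp
next
  case (Suc k)
  have "PP G f q j (r * Suc k) = PP G f q j (r + r * k)" by simp
  also have "\<dots> = PP G f q j r \<otimes> PP G f q ((q ^^ r) j) (r * k)"
    by (rule PP_add) fact
  finally show ?case using Suc by simp
qed

lemma PP_pow: "(\<And>i. f i \<in> carrier G) \<Longrightarrow> (q ^^ a) i = i \<Longrightarrow>
   PP G f q i (a * b) = (PP G f q i a) [^] b"
proof (induction b)
  case 0 then show ?case by simp
next
  case (Suc b)
  have "PP G f q i (a * Suc b) = PP G f q i (a + a * b)" by simp
  also have "\<dots> = PP G f q i a \<otimes> PP G f q i (a * b)"
    using PP_add[of f q i a "a*b"] Suc by simp
  also have "\<dots> = PP G f q i a \<otimes> PP G f q i a [^] b" using Suc by simp
  also have "\<dots> = PP G f q i a [^] Suc b"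
    by (rule nat_pow_Suc2[symmetric]) (simp add: PP_closed Suc.prems)
  finally show ?case .
qed

lemma PP_conj: assumes "\<And>i. f i \<in> carrier G" "(q ^^ k) j = j"
  shows "PP G f q (q j) k = inv (f j) \<otimes> PP G f q j k \<otimes> f j"
proof -
  have "f j \<otimes> PP G f q (q j) k = PP G f q j k \<otimes> f j"
    using PP_Suc2[of f q j k] assms by simp
  then have "inv (f j) \<otimes> (f j \<otimes> PP G f q (q j) k) = inv (f j) \<otimes> (PP G f q j k \<otimes> f j)"
    by simp
  then show ?thesis using assms by (simp add: m_assoc[symmetric] PP_closed)
qed

lemma PP_transport:
  assumes "m \<in> B'" "\<And>x. x \<in> B' \<Longrightarrow> q' x \<in> B' \<and> f' x = f (\<beta> x) \<and> q (\<beta> x) = \<beta> (q' x)"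
  shows "PP G f' q' m k = PP G f q (\<beta> m) k"
  using assms(1)
proof (induction k arbitrary: m)
  case 0 then show ?case by simp
next
  case (Suc k)
  then show ?case using assms(2)[of m] by simp
qed

end

lemma cycle_prod_PP: "cycle_prod G f p j k = PP G f (pinv p) j k"
proof (induction k arbitrary: j)
  case 0 then show ?case by (simp add: cycle_prod_def)
next
  case (Suc k)
  have "[0..<Suc k] = 0 # map Suc [0..<k]"
    by (simp add: map_Suc_upt upt_conv_Cons)
  then have "cycle_prod G f p j (Suc k) = f j \<otimes>\<^bsub>G\<^esub> cycle_prod G f p (pinv p j) k"
    by (simp add: cycle_prod_def funpow_Suc_right comp_def del: funpow.simps upt_Suc)
  then show ?case using Suc by simp
qed



lemma wr_mult_pair: "wr_mult G (f1, p1) (f2, p2) = (\<lambda>i. f1 i \<otimes>\<^bsub>G\<^esub> f2 (pinv p1 i), p1 \<circ> p2)"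
  by (simp add: wr_mult_def)

context group
begin

lemma wrA_mem_fix: "(f, p) \<in> carrier (wrA G A) \<Longrightarrow> i \<notin> A \<Longrightarrow> f i = \<one> \<and> p i = i \<and> pinv p i = i"
  using permutes_not_in[OF permutes_inv[of p A]] by (auto simp: wrA_carrier permutes_not_in)

lemma wrA_m_closed:
  assumes "x \<in> carrier (wrA G A)" "y \<in> carrier (wrA G A)"
  shows "x \<otimes>\<^bsub>wrA G A\<^esub> y \<in> carrier (wrA G A)"
proof -
  obtain f1 p1 where x: "x = (f1, p1)" by (cases x)
  obtain f2 p2 where y: "y = (f2, p2)" by (cases y)
  have p1: "p1 permutes A" and p2: "p2 permutes A" using assms x y by (auto simp: wrA_carrier)
  have "(\<lambda>i. f1 i \<otimes> f2 (pinv p1 i), p1 \<circ> p2) \<in> carrier (wrA G A)"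
    unfolding wrA_carrier
    using assms x y wrA_allc[of f1 p1 A] wrA_allc[of f2 p2 A] wrA_mem_fix[of f1 p1 A] wrA_mem_fix[of f2 p2 A]
    by (auto intro: permutes_compose[OF p2 p1])
  then show ?thesis using x y by (simp add: wrA_mult wr_mult_pair)
qed

lemma wrA_group: "Group.group (wrA G A)"
proof (rule groupI)
  fix x y assume "x \<in> carrier (wrA G A)" "y \<in> carrier (wrA G A)"
  then show "x \<otimes>\<^bsub>wrA G A\<^esub> y \<in> carrier (wrA G A)" by (rule wrA_m_closed)
next
  show "\<one>\<^bsub>wrA G A\<^esub> \<in> carrier (wrA G A)"
    by (simp add: wrA_one wrA_carrier permutes_id)
next
  fix x y z assume a: "x \<in> carrier (wrA G A)" "y \<in> carrier (wrA G A)" "z \<in> carrier (wrA G A)"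
  obtain f1 p1 where x: "x = (f1, p1)" by (cases x)
  obtain f2 p2 where y: "y = (f2, p2)" by (cases y)
  obtain f3 p3 where z: "z = (f3, p3)" by (cases z)
  have b1: "bij p1" and b2: "bij p2" using a x y by (auto simp: wrA_carrier permutes_bij)
  have c: "\<And>i. f1 i \<in> carrier G" "\<And>i. f2 i \<in> carrier G" "\<And>i. f3 i \<in> carrier G"
    using a x y z wrA_allc by blast+
  show "x \<otimes>\<^bsub>wrA G A\<^esub> y \<otimes>\<^bsub>wrA G A\<^esub> z = x \<otimes>\<^bsub>wrA G A\<^esub> (y \<otimes>\<^bsub>wrA G A\<^esub> z)"
    using x y z c by (simp add: wrA_mult wr_mult_pair o_inv_distrib[OF b1 b2] m_assoc o_assoc)
next
  fix x assume a: "x \<in> carrier (wrA G A)"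
  obtain f p where x: "x = (f, p)" by (cases x)
  have c: "\<And>i. f i \<in> carrier G" using a x wrA_allc by blast
  show "\<one>\<^bsub>wrA G A\<^esub> \<otimes>\<^bsub>wrA G A\<^esub> x = x"
    using x c by (simp add: wrA_mult wrA_one wr_mult_pair)
next
  fix x assume a: "x \<in> carrier (wrA G A)"
  obtain f p where x: "x = (f, p)" by (cases x)
  have c: "\<And>i. f i \<in> carrier G" using a x wrA_allc by blast
  have p: "p permutes A" using a x by (simp add: wrA_carrier)
  have y: "(\<lambda>i. inv (f (p i)), pinv p) \<in> carrier (wrA G A)"
    unfolding wrA_carrier using p c a x wrA_mem_fix[of f p A]
    by (auto simp: permutes_inv permutes_in_image)
  have "(\<lambda>i. inv (f (p i)), pinv p) \<otimes>\<^bsub>wrA G A\<^esub> x = \<one>\<^bsub>wrA G A\<^esub>"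
    using x c p by (simp add: wrA_mult wrA_one wr_mult_pair inv_inv_eq permutes_bij permutes_inv_o id_def)
  then show "\<exists>y\<in>carrier (wrA G A). y \<otimes>\<^bsub>wrA G A\<^esub> x = \<one>\<^bsub>wrA G A\<^esub>" using y by blast
qed

lemma wrA_pow:
  assumes "(f, p) \<in> carrier (wrA G A)"
  shows "(f, p) [^]\<^bsub>wrA G A\<^esub> m = (\<lambda>i. PP G f (pinv p) i m, p ^^ m)"
proof (induction m)
  case 0 then show ?case by (simp add: wrA_one id_def)
next
  case (Suc m)
  have b: "bij p" using assms by (auto simp: wrA_carrier intro: permutes_bij)
  have c: "\<And>i. f i \<in> carrier G" using assms wrA_allc by blast
  show ?case using Suc
    by (simp add: wrA_mult wr_mult_pair inv_fn[OF b] funpow_Suc_right comp_def del: funpow.simps PP.simps(2)) (simp add: fun_eq_iff PP_Suc2[OF c] del: PP.simps(2))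
qed

lemma wrA_subset: "B \<subseteq> A \<Longrightarrow> carrier (wrA G B) \<subseteq> carrier (wrA G A)"
  by (auto simp: wrA_def intro: permutes_subset)

lemma wrA_commute:
  assumes "x \<in> carrier (wrA G B1)" "y \<in> carrier (wrA G B2)" "B1 \<inter> B2 = {}"
  shows "wr_mult G x y = wr_mult G y x"
proof -
  obtain f1 p1 where x: "x = (f1, p1)" by (cases x)
  obtain f2 p2 where y: "y = (f2, p2)" by (cases y)
  have p1: "p1 permutes B1" and p2: "p2 permutes B2" using assms x y by (auto simp: wrA_carrier)
  have c: "\<And>i. f1 i \<in> carrier G" "\<And>i. f2 i \<in> carrier G" using assms x y wrA_allc by blast+
  have f1: "\<And>i. i \<notin> B1 \<Longrightarrow> f1 i = \<one> \<and> p1 i = i \<and> pinv p1 i = i"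
    using assms(1) x wrA_mem_fix by blast
  have f2: "\<And>i. i \<notin> B2 \<Longrightarrow> f2 i = \<one> \<and> p2 i = i \<and> pinv p2 i = i"
    using assms(2) y wrA_mem_fix by blast
  have i1: "\<And>i. i \<in> B1 \<Longrightarrow> pinv p1 i \<in> B1 \<and> p1 i \<in> B1"
    using p1 by (simp add: permutes_in_image permutes_inv)
  have i2: "\<And>i. i \<in> B2 \<Longrightarrow> pinv p2 i \<in> B2 \<and> p2 i \<in> B2"
    using p2 by (simp add: permutes_in_image permutes_inv)
  have e1: "f1 i \<otimes> f2 (pinv p1 i) = f2 i \<otimes> f1 (pinv p2 i)" for i
  proof (cases "i \<in> B1")
    case True
    then have "i \<notin> B2" "pinv p1 i \<notin> B2" using i1 assms(3) by auto
    then show ?thesis using f2 c by simp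
  next
    case False
    then show ?thesis
    proof (cases "i \<in> B2")
      case True
      then have "pinv p2 i \<notin> B1" using i2 assms(3) by auto
      then show ?thesis using f1 False c by simp
    next
      case F2: False
      then show ?thesis using f1 f2 False by simp
    qed
  qed
  have e2: "p1 (p2 i) = p2 (p1 i)" for i
  proof (cases "i \<in> B1")
    case True
    then have "i \<notin> B2" "p1 i \<notin> B2" using i1 assms(3) by auto
    then show ?thesis using f2 by simp
  next
    case False
    then show ?thesis using f1 f2 i2 assms(3) by (cases "i \<in> B2") auto
  qed
  show ?thesis using x y e1 e2 by (auto simp: wr_mult_pair)
qed

end


definition per :: "(nat \<Rightarrow> nat) \<Rightarrow> nat \<Rightarrow> nat" where
  "per p j = (LEAST m. 0 < m \<and> (p ^^ m) j = j)"

lemma per_fix: assumes "permutation p" shows "0 < per p j \<and> (p ^^ per p j) j = j"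
proof -
  obtain n where "n > 0" "(p ^^ n) j = j" using permutation_self[OF assms] by blast
  then show ?thesis unfolding per_def using LeastI[where P="\<lambda>m. 0 < m \<and> (p ^^ m) j = j" and k=n] by blast
qed

lemma per_dvd: fixes p :: "nat \<Rightarrow> nat" assumes "permutation p" shows "(p ^^ t) j = j \<longleftrightarrow> per p j dvd t"
proof
  assume a: "(p ^^ t) j = j"
  have f: "0 < per p j" "(p ^^ per p j) j = j" using per_fix[OF assms] by auto
  have "(p ^^ (t mod per p j)) j = j" using funpow_mod_eq[where f=p and n="per p j" and x=j and m=t] f a by simp
  moreover have "t mod per p j < per p j" using f by simp
  ultimately have "t mod per p j = 0"
    using not_less_Least[where k="t mod per p j" and P="\<lambda>m. 0 < m \<and> (p ^^ m) j = j"] unfolding per_def by auto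
  then show "per p j dvd t" by auto
next
  assume "per p j dvd t"
  then obtain c where t: "t = per p j * c" by auto
  have f: "(p ^^ per p j) j = j" using per_fix[OF assms] by auto
  have "((p ^^ per p j) ^^ c) j = j" by (induction c) (simp_all add: f)
  then show "(p ^^ t) j = j" by (simp add: t funpow_mult)
qed

lemma per_unique: assumes "permutation p" "\<And>t. (p ^^ t) j = j \<longleftrightarrow> d dvd t"
  shows "per p j = d"
proof -
  have "(p ^^ d) j = j" using assms(2) by simp
  then have 1: "per p j dvd d" using per_dvd[OF assms(1)] by simp
  have "d dvd per p j" using assms(2)[of "per p j"] per_fix[OF assms(1), of j] by simp
  then show ?thesis using 1 by (rule dvd_antisym[rotated])
qed

lemma funpow_eq_dvd: assumes "permutation p" "a \<le> b"
  shows "(p ^^ a) j = (p ^^ b) j \<longleftrightarrow> per p j dvd (b - a)"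
proof -
  have "inj (p ^^ a)" using assms(1) by (simp add: permutation_bijective bij_is_inj)
  have "(p ^^ b) j = (p ^^ a) ((p ^^ (b - a)) j)"
    using assms(2) by (metis funpow_add le_add_diff_inverse comp_apply)
  then have "(p ^^ a) j = (p ^^ b) j \<longleftrightarrow> (p ^^ (b - a)) j = j"
    using \<open>inj (p ^^ a)\<close> by (metis injD)
  then show ?thesis using per_dvd[OF assms(1)] by simp
qed

lemma funpow_eq_mod: assumes "permutation p"
  shows "(p ^^ a) j = (p ^^ b) j \<longleftrightarrow> a mod per p j = b mod per p j"
proof (cases "a \<le> b")
  case True
  have 1: "(p ^^ a) j = (p ^^ b) j \<longleftrightarrow> per p j dvd (b - a)" by (rule funpow_eq_dvd[OF assms True])
  have 2: "b mod per p j = a mod per p j \<longleftrightarrow> per p j dvd (b - a)" by (rule mod_eq_dvd_iff_nat[OF True])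
  have 3: "a mod per p j = b mod per p j \<longleftrightarrow> b mod per p j = a mod per p j" by auto
  show ?thesis using 1 2 3 by simp
next
  case False then have "b \<le> a" by simp
  have 1: "(p ^^ b) j = (p ^^ a) j \<longleftrightarrow> per p j dvd (a - b)" by (rule funpow_eq_dvd[OF assms \<open>b \<le> a\<close>])
  have 2: "a mod per p j = b mod per p j \<longleftrightarrow> per p j dvd (a - b)" by (rule mod_eq_dvd_iff_nat[OF \<open>b \<le> a\<close>])
  have 3: "(p ^^ a) j = (p ^^ b) j \<longleftrightarrow> (p ^^ b) j = (p ^^ a) j" by auto
  show ?thesis using 1 2 3 by simp
qed

lemma perm_cycle_img: assumes "permutation p"
  shows "perm_cycle p j = (\<lambda>t. (p ^^ t) j) ` {..<per p j}"
proof -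
  have "(p ^^ t) j = (p ^^ (t mod per p j)) j" for t
    using funpow_eq_mod[OF assms] per_fix[OF assms] by simp
  moreover have "t mod per p j < per p j" for t using per_fix[OF assms] by simp
  ultimately show ?thesis unfolding perm_cycle_def by auto
qed

lemma perm_cycle_card: assumes "permutation p"
  shows "card (perm_cycle p j) = per p j" "finite (perm_cycle p j)"
proof -
  have "inj_on (\<lambda>t. (p ^^ t) j) {..<per p j}"
    by (rule inj_onI) (simp add: funpow_eq_mod[OF assms])
  then show "card (perm_cycle p j) = per p j" unfolding perm_cycle_img[OF assms]
    by (simp add: card_image)
  show "finite (perm_cycle p j)" unfolding perm_cycle_img[OF assms] by simp
qed

lemma perm_cycle_self: "j \<in> perm_cycle p j"
  unfolding perm_cycle_def by (auto intro: exI[of _ 0])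

lemma perm_cycle_funpow: "(p ^^ t) j \<in> perm_cycle p j"
  unfolding perm_cycle_def by auto

lemma perm_cycle_eq: assumes "permutation p" "i \<in> perm_cycle p j"
  shows "perm_cycle p i = perm_cycle p j"
proof -
  obtain a where i: "i = (p ^^ a) j" using assms(2) unfolding perm_cycle_def by auto
  have f: "0 < per p j" using per_fix[OF assms(1)] by auto
  show ?thesis
  proof
    show "perm_cycle p i \<subseteq> perm_cycle p j"
    proof
      fix x assume "x \<in> perm_cycle p i"
      then obtain m where "x = (p ^^ m) i" unfolding perm_cycle_def by auto
      then have "x = (p ^^ (m + a)) j" by (simp add: i funpow_add)
      then show "x \<in> perm_cycle p j" unfolding perm_cycle_def by auto
    qed
  next
    show "perm_cycle p j \<subseteq> perm_cycle p i"
    proof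
      fix x assume "x \<in> perm_cycle p j"
      then obtain t where x: "x = (p ^^ t) j" unfolding perm_cycle_def by auto
      have "(p ^^ (t + per p j * a - a)) i = (p ^^ (t + per p j * a - a + a)) j"
        by (simp add: i funpow_add)
      also have "t + per p j * a - a + a = t + per p j * a"
      proof -
        have "a \<le> per p j * a" using f by simp
        then show ?thesis by linarith
      qed
      also have "(p ^^ (t + per p j * a)) j = (p ^^ t) j"
        using funpow_eq_mod[OF assms(1)] by simp
      finally show "x \<in> perm_cycle p i" unfolding perm_cycle_def x by (metis (mono_tags, lifting) mem_Collect_eq)
    qed
  qed
qed

lemma perm_cycle_step: "permutation p \<Longrightarrow> perm_cycle p (p j) = perm_cycle p j"
  by (rule perm_cycle_eq) (auto simp: perm_cycle_def intro!: exI[of _ 1])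

lemma perm_cycle_subset: "p permutes A \<Longrightarrow> j \<in> A \<Longrightarrow> perm_cycle p j \<subseteq> A"
  unfolding perm_cycle_def by (auto intro: permutes_in_funpow_image)

lemma pinv_funpow_fix: assumes "bij p"
  shows "(pinv p ^^ t) j = j \<longleftrightarrow> (p ^^ t) j = j"
proof -
  have b: "bij (p ^^ t)" using assms by simp
  have "pinv p ^^ t = pinv (p ^^ t)" using inv_fn[OF assms] by simp
  then show ?thesis using b by (metis bij_inv_eq_iff)
qed

lemma per_pow_prime:
  assumes "permutation p" "Factorial_Ring.prime (r::nat)"
  shows "per (p ^^ r) j = (if r dvd per p j then per p j div r else per p j)"
proof -
  have pr: "permutation (p ^^ r)" using assms(1) by (rule permutation_funpow)
  have fp: "((p ^^ r) ^^ t) j = j \<longleftrightarrow> per p j dvd r * t" for t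
    using per_dvd[OF assms(1)] by (simp add: funpow_mult)
  have f: "0 < per p j" using per_fix[OF assms(1)] by auto
  show ?thesis
  proof (cases "r dvd per p j")
    case True
    then obtain d where d: "per p j = r * d" by auto
    have r0: "r \<noteq> 0" using assms(2) by auto
    have "per (p ^^ r) j = d"
      by (rule per_unique[OF pr]) (simp add: fp d r0)
    then show ?thesis using True d r0 by simp
  next
    case False
    then have "coprime r (per p j)" using assms(2) by (simp add: prime_imp_coprime)
    then have "per p j dvd r * t \<longleftrightarrow> per p j dvd t" for t
      by (metis coprime_commute coprime_dvd_mult_right_iff)
    then have "per (p ^^ r) j = per p j"
      by (intro per_unique[OF pr]) (simp add: fp)
    then show ?thesis using False by simp
  qed
qed



lemma cycle_invar:
  assumes "permutation \<sigma>" "\<And>i. i \<in> A \<Longrightarrow> card (perm_cycle \<sigma> i) = k \<Longrightarrow> Q (\<sigma> i) = Q i"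
    "\<And>i. i \<in> A \<Longrightarrow> \<sigma> i \<in> A" "j \<in> A" "card (perm_cycle \<sigma> j) = k"
  shows "(\<sigma> ^^ t) j \<in> A \<and> card (perm_cycle \<sigma> ((\<sigma> ^^ t) j)) = k \<and> (Q ((\<sigma> ^^ t) j) = Q j)"
proof (induction t)
  case 0 then show ?case using assms by simp
next
  case (Suc t)
  have e: "perm_cycle \<sigma> ((\<sigma> ^^ t) j) = perm_cycle \<sigma> j"
    by (rule perm_cycle_eq[OF assms(1) perm_cycle_funpow])
  have e2: "perm_cycle \<sigma> ((\<sigma> ^^ Suc t) j) = perm_cycle \<sigma> j"
    by (rule perm_cycle_eq[OF assms(1) perm_cycle_funpow])
  show ?case using Suc assms(2)[of "(\<sigma> ^^ t) j"] assms(3)[of "(\<sigma> ^^ t) j"] e e2 by simp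
qed

lemma count_cycles:
  assumes "\<sigma> permutes A" "finite A" "\<And>i. i \<in> A \<Longrightarrow> card (perm_cycle \<sigma> i) = k \<Longrightarrow> Q (\<sigma> i) = Q i"
  shows "card {c. \<exists>j\<in>A. c = perm_cycle \<sigma> j \<and> card c = k \<and> Q j} * k
       = card {j\<in>A. card (perm_cycle \<sigma> j) = k \<and> Q j}"
proof -
  have pm: "permutation \<sigma>" using assms(1,2) permutation_permutes by blast
  have inA: "\<And>i. i \<in> A \<Longrightarrow> \<sigma> i \<in> A" using assms(1) by (simp add: permutes_in_image)
  define S where "S = {c. \<exists>j\<in>A. c = perm_cycle \<sigma> j \<and> card c = k \<and> Q j}"
  define J where "J = {j\<in>A. card (perm_cycle \<sigma> j) = k \<and> Q j}"
  have "J = \<Union>S"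
  proof
    show "J \<subseteq> \<Union>S" unfolding J_def S_def using perm_cycle_self by blast
  next
    show "\<Union>S \<subseteq> J"
    proof
      fix x assume "x \<in> \<Union>S"
      then obtain j where j: "j \<in> A" "x \<in> perm_cycle \<sigma> j" "card (perm_cycle \<sigma> j) = k" "Q j"
        unfolding S_def by auto
      then obtain t where x: "x = (\<sigma> ^^ t) j" unfolding perm_cycle_def by auto
      show "x \<in> J" using cycle_invar[where Q=Q and A=A and t=t, OF pm assms(3) inA j(1) j(3)] j unfolding J_def x by auto
    qed
  qed
  have fS: "finite S"
  proof -
    have "S \<subseteq> perm_cycle \<sigma> ` A" unfolding S_def by auto
    then show ?thesis using assms(2) finite_surj by blast
  qed
  have disj: "pairwise disjnt S"
    unfolding pairwise_def disjnt_def S_def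
    using perm_cycle_eq[OF pm] by blast
  have fin: "\<And>c. c \<in> S \<Longrightarrow> finite c" unfolding S_def using perm_cycle_card(2)[OF pm] by auto
  have "card J = sum card S" unfolding \<open>J = \<Union>S\<close> by (rule card_Union_disjoint[OF disj fin])
  also have "\<dots> = sum (\<lambda>_. k) S" by (rule sum.cong) (auto simp: S_def)
  also have "\<dots> = card S * k" by simp
  finally show ?thesis unfolding S_def J_def by simp
qed

context group
begin

lemma conj_class_mem: "y \<in> conj_class G x \<longleftrightarrow> (\<exists>h\<in>carrier G. y = h \<otimes> x \<otimes> inv h)"
  unfolding conj_class_def by auto

lemma conj_class_conj:
  assumes "y \<in> conj_class G x" "x \<in> carrier G" "z \<in> carrier G"
  shows "z \<otimes> y \<otimes> inv z \<in> conj_class G x"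
proof -
  obtain h where h: "h \<in> carrier G" "y = h \<otimes> x \<otimes> inv h" using assms(1) conj_class_mem by auto
  have "z \<otimes> y \<otimes> inv z = (z \<otimes> h) \<otimes> x \<otimes> inv (z \<otimes> h)"
    using h assms by (simp add: inv_mult_group m_assoc)
  then show ?thesis using h assms conj_class_mem by auto
qed

lemma conj_class_self: "x \<in> carrier G \<Longrightarrow> x \<in> conj_class G x"
  unfolding conj_class_mem by (rule bexI[of _ \<one>]) auto

lemma conj_class_closed: "x \<in> carrier G \<Longrightarrow> conj_class G x \<subseteq> carrier G"
  unfolding conj_class_def by auto

lemma conj_class_eq:
  assumes "y \<in> conj_class G x" "x \<in> carrier G"
  shows "conj_class G y = conj_class G x"
proof -
  obtain h where h: "h \<in> carrier G" "y = h \<otimes> x \<otimes> inv h" using assms(1) conj_class_mem by auto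
  have y: "y \<in> carrier G" using h assms by simp
  have x: "x = inv h \<otimes> y \<otimes> inv (inv h)" using h assms by (simp add: m_assoc) (simp add: m_assoc[symmetric])
  have "x \<in> conj_class G y" unfolding conj_class_mem
  proof (rule bexI[of _ "inv h"])
    show "x = inv h \<otimes> y \<otimes> inv (inv h)" by (rule x)
    show "inv h \<in> carrier G" using h by simp
  qed
  show ?thesis
  proof
    show "conj_class G y \<subseteq> conj_class G x"
    proof
      fix w assume "w \<in> conj_class G y"
      then obtain h2 where "h2 \<in> carrier G" "w = h2 \<otimes> y \<otimes> inv h2" using conj_class_mem by auto
      then show "w \<in> conj_class G x" using conj_class_conj assms by auto
    qed
  next
    show "conj_class G x \<subseteq> conj_class G y"
    proof
      fix w assume "w \<in> conj_class G x"
      then obtain h2 where "h2 \<in> carrier G" "w = h2 \<otimes> x \<otimes> inv h2" using conj_class_mem by auto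
      then show "w \<in> conj_class G y" using conj_class_conj[OF \<open>x \<in> conj_class G y\<close> y] by auto
    qed
  qed
qed

lemma classes_disj:
  assumes "C \<in> conj_classes G" "C' \<in> conj_classes G" "y \<in> C" "y \<in> C'"
  shows "C = C'"
proof -
  obtain x where x: "x \<in> carrier G" "C = conj_class G x" using assms(1) unfolding conj_classes_def by auto
  obtain x' where x': "x' \<in> carrier G" "C' = conj_class G x'" using assms(2) unfolding conj_classes_def by auto
  show ?thesis using conj_class_eq[of y x] conj_class_eq[of y x'] x x' assms by simp
qed

lemma classes_conj_iff:
  assumes "C \<in> conj_classes G" "z \<in> carrier G" "y \<in> carrier G"
  shows "inv z \<otimes> y \<otimes> z \<in> C \<longleftrightarrow> y \<in> C"
proof -
  obtain x where x: "x \<in> carrier G" "C = conj_class G x" using assms(1) unfolding conj_classes_def by auto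
  show ?thesis
  proof
    assume "inv z \<otimes> y \<otimes> z \<in> C"
    then have "z \<otimes> (inv z \<otimes> y \<otimes> z) \<otimes> inv z \<in> C" using conj_class_conj x assms by auto
    then show "y \<in> C" using assms by (simp add: m_assoc) (simp add: m_assoc[symmetric])
  next
    assume "y \<in> C"
    then have "inv z \<otimes> y \<otimes> inv (inv z) \<in> C" using conj_class_conj[of y x "inv z"] x assms by simp
    then show "inv z \<otimes> y \<otimes> z \<in> C" using assms by simp
  qed
qed

lemma classes_rel:
  assumes "C \<in> conj_classes G" "y \<in> C" "y' \<in> C"
  shows "\<exists>z\<in>carrier G. y' = z \<otimes> y \<otimes> inv z"
proof -
  obtain x where x: "x \<in> carrier G" "C = conj_class G x" using assms(1) unfolding conj_classes_def by auto
  have "C = conj_class G y" using conj_class_eq[of y x] x assms by simp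
  then show ?thesis using assms conj_class_mem by auto
qed

lemma cp_invar:
  assumes "(F, \<sigma>) \<in> carrier (wrA G A)" "finite A" "C \<in> conj_classes G"
    "card (perm_cycle \<sigma> i) = k"
  shows "cycle_prod G F \<sigma> (\<sigma> i) k \<in> C \<longleftrightarrow> cycle_prod G F \<sigma> i k \<in> C"
proof -
  have sp: "\<sigma> permutes A" using assms(1) by (simp add: wrA_carrier)
  then have pm: "permutation \<sigma>" using assms(2) permutation_permutes by blast
  have b: "bij \<sigma>" using sp permutes_bij by blast
  have c: "\<And>i. F i \<in> carrier G" using assms(1) wrA_allc by blast
  let ?x = "\<sigma> i"
  have qx: "pinv \<sigma> ?x = i" using b by (simp add: bij_is_inj)
  have "card (perm_cycle \<sigma> ?x) = k" using perm_cycle_step[OF pm] assms(4) by simp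
  then have "per \<sigma> ?x = k" using perm_cycle_card[OF pm] by simp
  then have "(\<sigma> ^^ k) ?x = ?x" using per_fix[OF pm] by metis
  then have fx: "(pinv \<sigma> ^^ k) ?x = ?x" using pinv_funpow_fix[OF b] by simp
  have "PP G F (pinv \<sigma>) i k = inv (F ?x) \<otimes> PP G F (pinv \<sigma>) ?x k \<otimes> F ?x"
    using PP_conj[OF c fx] qx by simp
  then show ?thesis
    using classes_conj_iff[OF assms(3) c[of ?x] PP_closed[OF c]] by (simp add: cycle_prod_PP)
qed

end


definition Jset :: "('a, 'b) monoid_scheme \<Rightarrow> nat set \<Rightarrow> (nat \<Rightarrow> 'a) \<times> (nat \<Rightarrow> nat) \<Rightarrow> 'a set \<Rightarrow> nat \<Rightarrow> nat set" where
  "Jset G A g C k = {j\<in>A. card (perm_cycle (snd g) j) = k \<and> cycle_prod G (fst g) (snd g) j k \<in> C}"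

lemma per_pow_iff:
  assumes "permutation p" "Factorial_Ring.prime (r::nat)" "r dvd k" "0 < k"
  shows "per (p ^^ r) j = k \<longleftrightarrow> per p j = r * k"
proof -
  have r0: "r \<noteq> 0" using assms(2) by auto
  show ?thesis
  proof (cases "r dvd per p j")
    case True
    then show ?thesis using per_pow_prime[OF assms(1,2)] r0 by auto
  next
    case False
    then have "per p j \<noteq> r * k" by auto
    moreover have "per p j \<noteq> k" using False assms(3) by auto
    ultimately show ?thesis using per_pow_prime[OF assms(1,2)] False by auto
  qed
qed

context group
begin

lemma type_count:
  assumes "g \<in> carrier (wrA G A)" "finite A" "C \<in> conj_classes G"
  shows "card {c. \<exists>j\<in>A. c = perm_cycle (snd g) j \<and> card c = k \<and> cycle_prod G (fst g) (snd g) j k \<in> C} * k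
     = card (Jset G A g C k)"
proof -
  obtain F \<sigma> where g: "g = (F, \<sigma>)" by (cases g)
  have sp: "\<sigma> permutes A" using assms(1) g by (simp add: wrA_carrier)
  show ?thesis unfolding Jset_def g fst_conv snd_conv
    by (rule count_cycles[OF sp assms(2)]) (rule cp_invar[OF assms(1)[unfolded g] assms(2,3)])
qed

lemma forward:
  assumes h: "(f, p) \<in> carrier (wrA G A)" and fin: "finite A" and pr: "Factorial_Ring.prime r"
    and C: "C \<in> conj_classes G" and k: "0 < k" "r dvd k"
  shows "r * k dvd card (Jset G A ((f, p) [^]\<^bsub>wrA G A\<^esub> r) C k)"
proof -
  have sp: "p permutes A" using h by (simp add: wrA_carrier)
  have pm: "permutation p" using sp fin permutation_permutes by blast
  have pmr: "permutation (p ^^ r)" using pm by (rule permutation_funpow)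
  have b: "bij p" using sp permutes_bij by blast
  have c: "\<And>i. f i \<in> carrier G" using h wrA_allc by blast
  have "Jset G A ((f, p) [^]\<^bsub>wrA G A\<^esub> r) C k = Jset G A (f, p) C (r * k)"
  proof -
    have "card (perm_cycle (p ^^ r) j) = k \<and> cycle_prod G (\<lambda>i. PP G f (pinv p) i r) (p ^^ r) j k \<in> C
       \<longleftrightarrow> card (perm_cycle p j) = r * k \<and> cycle_prod G f p j (r * k) \<in> C" for j
    proof -
      have 1: "card (perm_cycle (p ^^ r) j) = k \<longleftrightarrow> card (perm_cycle p j) = r * k"
        using per_pow_iff[OF pm pr k(2) k(1)] perm_cycle_card[OF pm] perm_cycle_card[OF pmr] by simp
      have 2: "cycle_prod G (\<lambda>i. PP G f (pinv p) i r) (p ^^ r) j k = cycle_prod G f p j (r * k)"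
        unfolding cycle_prod_PP inv_fn[OF b] by (rule PP_block[OF c])
      show ?thesis using 1 2 by simp
    qed
    then show ?thesis unfolding Jset_def wrA_pow[OF h] by simp
  qed
  also have "card (Jset G A (f, p) C (r * k)) = card {c. \<exists>j\<in>A. c = perm_cycle p j \<and> card c = r * k \<and> cycle_prod G f p j (r * k) \<in> C} * (r * k)"
    using type_count[OF h fin C, of "r * k"] by simp
  finally show ?thesis by simp
qed

end


definition restr :: "('a, 'b) monoid_scheme \<Rightarrow> (nat \<Rightarrow> 'a) \<times> (nat \<Rightarrow> nat) \<Rightarrow> nat set \<Rightarrow> (nat \<Rightarrow> 'a) \<times> (nat \<Rightarrow> nat)" where
  "restr G g B = (\<lambda>i. if i \<in> B then fst g i else \<one>\<^bsub>G\<^esub>, \<lambda>i. if i \<in> B then snd g i else i)"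

lemma inv_image_eq:
  assumes "\<sigma> permutes A" "finite A" "B \<subseteq> A" "\<And>i. i \<in> B \<Longrightarrow> \<sigma> i \<in> B"
  shows "\<sigma> ` B = B"
proof -
  have 1: "inj_on \<sigma> B" by (rule inj_on_subset[OF permutes_inj[OF assms(1)]]) simp
  have 2: "finite B" by (rule finite_subset[OF assms(3,2)])
  have 3: "\<sigma> ` B \<subseteq> B" using assms(4) by auto
  show ?thesis by (rule endo_inj_surj[OF 2 3 1])
qed

lemma compl_invariant:
  assumes "\<sigma> permutes A" "finite A" "B \<subseteq> A" "\<And>i. i \<in> B \<Longrightarrow> \<sigma> i \<in> B" "i \<in> A - B"
  shows "\<sigma> i \<in> A - B"
proof -
  have iA: "i \<in> A" "i \<notin> B" using assms(5) by auto
  have 1: "\<sigma> i \<in> A" using iA(1) permutes_in_image[OF assms(1)] by simp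
  have 2: "\<sigma> i \<notin> B"
  proof
    assume "\<sigma> i \<in> B"
    then have "\<sigma> i \<in> \<sigma> ` B" using inv_image_eq[OF assms(1-4)] by simp
    then obtain b where b: "b \<in> B" "\<sigma> i = \<sigma> b" by blast
    have "i = b" using injD[OF permutes_inj[OF assms(1)] b(2)] .
    then show False using b(1) iA(2) by simp
  qed
  show ?thesis using 1 2 by simp
qed

lemma restr_perm_permutes:
  assumes "\<sigma> permutes A" "finite A" "B \<subseteq> A" "\<And>i. i \<in> B \<Longrightarrow> \<sigma> i \<in> B"
  shows "(\<lambda>i. if i \<in> B then \<sigma> i else i) permutes B"
proof (rule bij_imp_permutes)
  have "bij_betw \<sigma> B B"
    using inv_image_eq[OF assms] permutes_inj[OF assms(1)] inj_on_subset
    by (auto simp: bij_betw_def intro: inj_on_subset[of \<sigma> UNIV B])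
  then show "bij_betw (\<lambda>i. if i \<in> B then \<sigma> i else i) B B"
    by (rule bij_betw_cong[THEN iffD1, rotated]) auto
qed auto

lemma restr_funpow:
  assumes "\<And>i. i \<in> B \<Longrightarrow> \<sigma> i \<in> B" "j \<in> B"
  shows "((\<lambda>i. if i \<in> B then \<sigma> i else i) ^^ t) j = (\<sigma> ^^ t) j \<and> (\<sigma> ^^ t) j \<in> B"
  by (induction t) (use assms in auto)

lemma restr_cycle:
  assumes "\<And>i. i \<in> B \<Longrightarrow> \<sigma> i \<in> B" "j \<in> B"
  shows "perm_cycle (\<lambda>i. if i \<in> B then \<sigma> i else i) j = perm_cycle \<sigma> j"
  unfolding perm_cycle_def using restr_funpow[OF assms] by simp

lemma restr_pinv:
  assumes "\<sigma> permutes A" "finite A" "B \<subseteq> A" "\<And>i. i \<in> B \<Longrightarrow> \<sigma> i \<in> B" "x \<in> B"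
  shows "pinv (\<lambda>i. if i \<in> B then \<sigma> i else i) x = pinv \<sigma> x \<and> pinv \<sigma> x \<in> B"
proof -
  obtain b where b: "b \<in> B" "x = \<sigma> b" using inv_image_eq[OF assms(1-4)] assms(5) by force
  have "pinv \<sigma> x = b" using b permutes_inj[OF assms(1)] by (simp add: inv_f_eq)
  moreover have "pinv (\<lambda>i. if i \<in> B then \<sigma> i else i) x = b"
    using b permutes_inj[OF restr_perm_permutes[OF assms(1-4)]] by (intro inv_f_eq) auto
  ultimately show ?thesis using b by simp
qed

context group
begin

lemma restr_carrier:
  assumes "g \<in> carrier (wrA G A)" "finite A" "B \<subseteq> A" "\<And>i. i \<in> B \<Longrightarrow> snd g i \<in> B"
  shows "restr G g B \<in> carrier (wrA G B)"
proof -
  obtain F \<sigma> where g: "g = (F, \<sigma>)" by (cases g)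
  have sp: "\<sigma> permutes A" using assms(1) g by (simp add: wrA_carrier)
  have inv1: "\<And>i. i \<in> B \<Longrightarrow> \<sigma> i \<in> B" using assms(4) g by simp
  show ?thesis unfolding g restr_def fst_conv snd_conv wrA_carrier
    using restr_perm_permutes[OF sp assms(2,3) inv1] assms(1) g by (auto simp: wrA_carrier)
qed

lemma restr_split:
  assumes "g \<in> carrier (wrA G A)" "finite A" "B \<subseteq> A" "\<And>i. i \<in> B \<Longrightarrow> snd g i \<in> B"
  shows "g = wr_mult G (restr G g B) (restr G g (A - B))"
proof -
  obtain F \<sigma> where g: "g = (F, \<sigma>)" by (cases g)
  have sp: "\<sigma> permutes A" using assms(1) g by (simp add: wrA_carrier)
  have inv1: "\<And>i. i \<in> B \<Longrightarrow> \<sigma> i \<in> B" using assms(4) g by simp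
  have pB: "(\<lambda>i. if i \<in> B then \<sigma> i else i) permutes B" by (rule restr_perm_permutes[OF sp assms(2,3) inv1])
  have q1: "\<And>i. i \<notin> B \<Longrightarrow> pinv (\<lambda>i. if i \<in> B then \<sigma> i else i) i = i"
    using permutes_not_in[OF permutes_inv[OF pB]] by blast
  have q2: "\<And>i. i \<in> B \<Longrightarrow> pinv (\<lambda>i. if i \<in> B then \<sigma> i else i) i \<in> B"
    using permutes_in_image[OF permutes_inv[OF pB]] by blast
  have c: "\<And>i. F i \<in> carrier G" using assms(1) g wrA_allc by blast
  have F1: "\<And>i. i \<notin> A \<Longrightarrow> F i = \<one> \<and> \<sigma> i = i" using assms(1) g wrA_mem_fix by blast
  have cA: "\<And>i. i \<in> A - B \<Longrightarrow> \<sigma> i \<in> A - B" using compl_invariant[OF sp assms(2,3) inv1] by blast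
  have e1: "F i = (if i \<in> B then F i else \<one>) \<otimes>
     (if pinv (\<lambda>i. if i \<in> B then \<sigma> i else i) i \<in> A - B then F (pinv (\<lambda>i. if i \<in> B then \<sigma> i else i) i) else \<one>)" for i
  proof (cases "i \<in> B")
    case True then show ?thesis using q2[of i] c[of i] by simp
  next
    case False then show ?thesis using q1[OF False] c[of i] F1[of i] by (cases "i \<in> A") simp_all
  qed
  have e2: "\<sigma> i = (if (if i \<in> A - B then \<sigma> i else i) \<in> B then \<sigma> (if i \<in> A - B then \<sigma> i else i)
                    else (if i \<in> A - B then \<sigma> i else i))" for i
  proof (cases "i \<in> A - B")
    case True then show ?thesis using cA[OF True] by simp
  next
    case False then show ?thesis using F1[of i] assms(3) by (cases "i \<in> B") auto
  qed
  show ?thesis unfolding g restr_def wr_mult_pair fst_conv snd_conv comp_def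
    apply (simp only: prod.inject)
    apply (intro conjI ext)
     apply (rule e1)
    apply (rule e2)
    done
qed

lemma restr_Jset:
  assumes "g \<in> carrier (wrA G A)" "finite A" "B \<subseteq> A" "\<And>i. i \<in> B \<Longrightarrow> snd g i \<in> B"
  shows "Jset G B (restr G g B) C k = Jset G A g C k \<inter> B"
proof -
  obtain F \<sigma> where g: "g = (F, \<sigma>)" by (cases g)
  have sp: "\<sigma> permutes A" using assms(1) g by (simp add: wrA_carrier)
  have inv1: "\<And>i. i \<in> B \<Longrightarrow> \<sigma> i \<in> B" using assms(4) g by simp
  have rc: "\<And>j. j \<in> B \<Longrightarrow> perm_cycle (\<lambda>i. if i \<in> B then \<sigma> i else i) j = perm_cycle \<sigma> j"
    using restr_cycle[of B \<sigma>] inv1 by blast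
  have cp: "cycle_prod G (\<lambda>i. if i \<in> B then F i else \<one>) (\<lambda>i. if i \<in> B then \<sigma> i else i) j k = cycle_prod G F \<sigma> j k"
    if "j \<in> B" for j k
    unfolding cycle_prod_PP
  proof (rule PP_transport[where \<beta>="\<lambda>x. x" and B'=B, OF that])
    fix x assume x: "x \<in> B"
    show "pinv (\<lambda>i. if i \<in> B then \<sigma> i else i) x \<in> B \<and> (if x \<in> B then F x else \<one>) = F x \<and>
          pinv \<sigma> x = pinv (\<lambda>i. if i \<in> B then \<sigma> i else i) x"
      using restr_pinv[OF sp assms(2,3) inv1 x] x by simp
  qed
  show ?thesis
  proof (rule Set.set_eqI)
    fix j
    show "j \<in> Jset G B (restr G g B) C k \<longleftrightarrow> j \<in> Jset G A g C k \<inter> B"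
    proof (cases "j \<in> B")
      case True
      have "j \<in> A" using True assms(3) by auto
      then show ?thesis unfolding Jset_def g restr_def fst_conv snd_conv
        using rc[OF True] cp[OF True] True by simp
    next
      case False then show ?thesis unfolding Jset_def by simp
    qed
  qed
qed

lemma combine:
  fixes r :: nat
  assumes "g \<in> carrier (wrA G A)" "finite A" "B \<subseteq> A" "\<And>i. i \<in> B \<Longrightarrow> snd g i \<in> B"
    "h1 \<in> carrier (wrA G B)" "h1 [^]\<^bsub>wrA G B\<^esub> r = restr G g B"
    "h2 \<in> carrier (wrA G (A - B))" "h2 [^]\<^bsub>wrA G (A - B)\<^esub> r = restr G g (A - B)"
  shows "\<exists>h\<in>carrier (wrA G A). h [^]\<^bsub>wrA G A\<^esub> r = g"
proof -
  interpret W: group "wrA G A" by (rule wrA_group)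
  have h1: "h1 \<in> carrier (wrA G A)" using wrA_subset[OF assms(3)] assms(5) by blast
  have h2: "h2 \<in> carrier (wrA G A)" using wrA_subset[of "A - B" A] assms(7) by blast
  have cm: "h1 \<otimes>\<^bsub>wrA G A\<^esub> h2 = h2 \<otimes>\<^bsub>wrA G A\<^esub> h1"
    unfolding wrA_mult by (rule wrA_commute[OF assms(5,7)]) auto
  have "(h1 \<otimes>\<^bsub>wrA G A\<^esub> h2) [^]\<^bsub>wrA G A\<^esub> r = h1 [^]\<^bsub>wrA G A\<^esub> r \<otimes>\<^bsub>wrA G A\<^esub> h2 [^]\<^bsub>wrA G A\<^esub> r"
    by (rule W.pow_mult_distrib[OF cm h1 h2])
  also have "\<dots> = g"
  proof -
    have e1: "h1 [^]\<^bsub>wrA G A\<^esub> r = restr G g B"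
      using assms(6) wrA_pow_indep[where x=h1 and G=G and A=A and B=B and m=r] by simp
    have e2: "h2 [^]\<^bsub>wrA G A\<^esub> r = restr G g (A - B)"
      using assms(8) wrA_pow_indep[where x=h2 and G=G and A=A and B="A - B" and m=r] by simp
    show ?thesis unfolding e1 e2 wrA_mult by (rule restr_split[OF assms(1-4), symmetric])
  qed
  finally have "(h1 \<otimes>\<^bsub>wrA G A\<^esub> h2) [^]\<^bsub>wrA G A\<^esub> r = g" .
  then show ?thesis by (rule bexI[OF _ W.m_closed[OF h1 h2]])
qed

end


lemma funpow_fix_outside: "\<sigma>' = (\<lambda>i. if i \<in> D then \<sigma> i else i) \<Longrightarrow> i \<notin> D \<Longrightarrow> (\<sigma>' ^^ t) i = i"
  by (induction t) auto

context monoid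
begin

lemma pow_mod_eq:
  assumes "x \<in> carrier G" "x [^] (M::nat) = \<one>"
  shows "x [^] a = x [^] (a mod M)"
proof -
  have "x [^] a = x [^] (M * (a div M) + a mod M)" by simp
  also have "\<dots> = (x [^] M) [^] (a div M) \<otimes> x [^] (a mod M)"
    using assms(1) by (simp add: nat_pow_mult nat_pow_pow)
  also have "\<dots> = x [^] (a mod M)" using assms by simp
  finally show ?thesis .
qed

end

context group
begin

lemma coprime_cycle_root:
  fixes r :: nat
  assumes fG: "finite (carrier G)" and g: "(F, \<sigma>) \<in> carrier (wrA G A)" and fin: "finite A" and j: "j \<in> A"
    and pr: "Factorial_Ring.prime r" and nd: "\<not> r dvd per \<sigma> j" and nG: "\<not> r dvd order G"
    and D: "D = perm_cycle \<sigma> j"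
  shows "\<exists>h\<in>carrier (wrA G D). h [^]\<^bsub>wrA G D\<^esub> r = restr G (F, \<sigma>) D"
proof -
  interpret W: group "wrA G D" by (rule wrA_group)
  have sp: "\<sigma> permutes A" using g by (simp add: wrA_carrier)
  have pm: "permutation \<sigma>" using sp fin permutation_permutes by blast
  have DA: "D \<subseteq> A" using perm_cycle_subset[OF sp j] D by simp
  have invD: "\<And>i. i \<in> D \<Longrightarrow> \<sigma> i \<in> D"
  proof -
    fix i assume "i \<in> D"
    then obtain t where "i = (\<sigma> ^^ t) j" using D unfolding perm_cycle_def by auto
    then have "\<sigma> i = (\<sigma> ^^ Suc t) j" by simp
    then show "\<sigma> i \<in> D" using D perm_cycle_funpow by metis
  qed
  define x where "x = restr G (F, \<sigma>) D"
  have xc: "x \<in> carrier (wrA G D)" unfolding x_def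
    by (rule restr_carrier[OF g fin DA]) (simp add: invD)
  define F' where "F' = (\<lambda>i. if i \<in> D then F i else \<one>)"
  define \<sigma>' where "\<sigma>' = (\<lambda>i. if i \<in> D then \<sigma> i else i)"
  have x: "x = (F', \<sigma>')" unfolding x_def restr_def F'_def \<sigma>'_def fst_conv snd_conv by simp
  have sp': "\<sigma>' permutes D" using xc x by (simp add: wrA_carrier)
  have b': "bij \<sigma>'" using sp' permutes_bij by blast
  define k0 where "k0 = per \<sigma> j"
  have k0: "0 < k0" using per_fix[OF pm] k0_def by simp
  have fixk: "(\<sigma>' ^^ k0) i = i" for i
  proof (cases "i \<in> D")
    case True
    have "perm_cycle \<sigma> i = perm_cycle \<sigma> j" using perm_cycle_eq[OF pm] True D by simp
    then have "per \<sigma> i = k0" using perm_cycle_card[OF pm] k0_def by metis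
    then have "(\<sigma> ^^ k0) i = i" using per_dvd[OF pm] by simp
    then show ?thesis using restr_funpow[of D \<sigma> i k0] invD True \<sigma>'_def by simp
  next
    case False then show ?thesis using funpow_fix_outside[OF \<sigma>'_def] by simp
  qed
  have fixq: "(pinv \<sigma>' ^^ k0) i = i" for i using pinv_funpow_fix[OF b'] fixk by simp
  have cF: "\<And>i. F' i \<in> carrier G" using xc x wrA_allc by blast
  define M where "M = k0 * order G"
  have M0: "0 < M" unfolding M_def using k0 order_gt_0_iff_finite fG by simp
  have xM: "x [^]\<^bsub>wrA G D\<^esub> M = \<one>\<^bsub>wrA G D\<^esub>"
  proof -
    have 1: "PP G F' (pinv \<sigma>') i M = \<one>" for i
      unfolding M_def using PP_pow[OF cF fixq] pow_order_eq_1 PP_closed[OF cF] by simp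
    have "\<sigma>' ^^ k0 = id" using fixk by auto
    then have 2: "\<sigma>' ^^ M = id" unfolding M_def by (simp add: funpow_mult[symmetric])
    show ?thesis using wrA_pow[OF xc[unfolded x]] 1 2 x by (simp add: wrA_one)
  qed
  have cop: "coprime r M"
  proof -
    have "coprime r k0" using nd pr k0_def by (simp add: prime_imp_coprime)
    moreover have "coprime r (order G)" using nG pr by (simp add: prime_imp_coprime)
    ultimately show ?thesis unfolding M_def by simp
  qed
  obtain s where s: "[r * s = Suc 0] (mod M)" using cong_solve_coprime_nat[OF cop] by blast
  have "(x [^]\<^bsub>wrA G D\<^esub> s) [^]\<^bsub>wrA G D\<^esub> r = x [^]\<^bsub>wrA G D\<^esub> (s * r)"
    using W.nat_pow_pow[OF xc] by simp
  also have "\<dots> = x [^]\<^bsub>wrA G D\<^esub> ((r * s) mod M)"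
    using W.pow_mod_eq[OF xc xM] by (simp add: mult.commute)
  also have "\<dots> = x [^]\<^bsub>wrA G D\<^esub> (Suc 0 mod M)" using s unfolding cong_def by simp
  also have "\<dots> = x [^]\<^bsub>wrA G D\<^esub> (Suc 0)"
    using W.pow_mod_eq[OF xc xM, of "Suc 0"] by simp
  also have "\<dots> = x" using xc by simp
  finally show ?thesis using W.nat_pow_closed[OF xc] x_def by blast
qed

end


definition shiftp :: "nat \<Rightarrow> nat \<Rightarrow> nat \<Rightarrow> nat" where
  "shiftp d N m = (if m < N then (m + d) mod N else m)"

lemma shiftp_comp: "shiftp a N (shiftp b N m) = shiftp (a + b) N m"
proof (cases "m < N")
  case True
  then have "(m + b) mod N < N" by simp
  have "((m + b) mod N + a) mod N = ((m + b) + a) mod N" by (rule mod_add_left_eq)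
  also have "(m + b) + a = m + (a + b)" by simp
  finally show ?thesis using True \<open>(m + b) mod N < N\<close> unfolding shiftp_def by simp
next
  case False then show ?thesis unfolding shiftp_def by simp
qed

lemma shiftp_N: "shiftp N N m = m"
  unfolding shiftp_def by simp

lemma shiftp_funpow: "shiftp 1 N ^^ t = shiftp t N"
proof (induction t)
  case 0 then show ?case by (auto simp: shiftp_def fun_eq_iff)
next
  case (Suc t) then show ?case by (simp add: fun_eq_iff shiftp_comp)
qed

lemma shiftp_inv_comp:
  assumes "d \<le> N"
  shows "shiftp (N - d) N \<circ> shiftp d N = id" "shiftp d N \<circ> shiftp (N - d) N = id"
  using assms by (auto simp: fun_eq_iff shiftp_comp shiftp_N)

lemma shiftp_pinv: "d \<le> N \<Longrightarrow> pinv (shiftp d N) = shiftp (N - d) N"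
  using inv_unique_comp[OF shiftp_inv_comp(2) shiftp_inv_comp(1)] by simp

lemma shiftp_permutes:
  assumes "d \<le> N"
  shows "shiftp d N permutes {0..<N}"
proof (rule bij_imp_permutes)
  show "bij_betw (shiftp d N) {0..<N} {0..<N}"
  proof (rule bij_betw_byWitness[where f'="shiftp (N - d) N"])
    show "\<forall>a\<in>{0..<N}. shiftp (N - d) N (shiftp d N a) = a"
      using shiftp_inv_comp(1)[OF assms] by (simp add: fun_eq_iff)
    show "\<forall>a\<in>{0..<N}. shiftp d N (shiftp (N - d) N a) = a"
      using shiftp_inv_comp(2)[OF assms] by (simp add: fun_eq_iff)
    show "shiftp d N ` {0..<N} \<subseteq> {0..<N}" by (auto simp: shiftp_def)
    show "shiftp (N - d) N ` {0..<N} \<subseteq> {0..<N}" by (auto simp: shiftp_def)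
  qed
  show "\<And>x. x \<notin> {0..<N} \<Longrightarrow> shiftp d N x = x" by (simp add: shiftp_def)
qed

lemma ar1: fixes m N r k0 :: nat assumes "m < N" "r \<le> m" shows "(m + (N - r)) mod N = m - r"
proof -
  have "m + (N - r) = (m - r) + N" using assms by linarith
  moreover have "m - r < N" using assms by simp
  ultimately show ?thesis by simp
qed

lemma ar2: fixes m N r k0 :: nat assumes "m < r" "r \<le> N" shows "(m + (N - r)) mod N = m + (N - r)"
  using assms by (intro mod_less) linarith

lemma ar3: fixes m N r k0 :: nat assumes "0 < r" "r \<le> m" shows "(m - r) div r = m div r - 1" "(m - r) mod r = m mod r"
  using assms by (simp_all add: le_div_geq[of r m] le_mod_geq)

lemma ar4: fixes m N r k0 :: nat assumes "m < r" "0 < k0" shows "(m + (r * k0 - r)) div r = k0 - 1" "(m + (r * k0 - r)) mod r = m"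
proof -
  have e: "m + (r * k0 - r) = m + r * (k0 - 1)" by (simp add: diff_mult_distrib2)
  show "(m + (r * k0 - r)) div r = k0 - 1" unfolding e using assms by simp
  show "(m + (r * k0 - r)) mod r = m" unfolding e using assms by simp
qed

context group
begin

lemma conj_pow_W:
  assumes "Group.group W" "e \<in> carrier W" "x \<in> carrier W"
  shows "(e \<otimes>\<^bsub>W\<^esub> x \<otimes>\<^bsub>W\<^esub> inv\<^bsub>W\<^esub> e) [^]\<^bsub>W\<^esub> (n::nat) = e \<otimes>\<^bsub>W\<^esub> x [^]\<^bsub>W\<^esub> n \<otimes>\<^bsub>W\<^esub> inv\<^bsub>W\<^esub> e"
proof -
  interpret W: group W by fact
  have cancel: "\<And>z. z \<in> carrier W \<Longrightarrow> inv\<^bsub>W\<^esub> e \<otimes>\<^bsub>W\<^esub> (e \<otimes>\<^bsub>W\<^esub> z) = z"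
    using assms(2) by (simp add: W.m_assoc[symmetric])
  show ?thesis
  proof (induction n)
    case 0 then show ?case using assms by simp
  next
    case (Suc n)
    have "(e \<otimes>\<^bsub>W\<^esub> x \<otimes>\<^bsub>W\<^esub> inv\<^bsub>W\<^esub> e) [^]\<^bsub>W\<^esub> Suc n
        = (e \<otimes>\<^bsub>W\<^esub> x [^]\<^bsub>W\<^esub> n \<otimes>\<^bsub>W\<^esub> inv\<^bsub>W\<^esub> e) \<otimes>\<^bsub>W\<^esub> (e \<otimes>\<^bsub>W\<^esub> x \<otimes>\<^bsub>W\<^esub> inv\<^bsub>W\<^esub> e)"
      using Suc by simp
    also have "\<dots> = e \<otimes>\<^bsub>W\<^esub> (x [^]\<^bsub>W\<^esub> n \<otimes>\<^bsub>W\<^esub> (inv\<^bsub>W\<^esub> e \<otimes>\<^bsub>W\<^esub> e) \<otimes>\<^bsub>W\<^esub> x) \<otimes>\<^bsub>W\<^esub> inv\<^bsub>W\<^esub> e"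
      using assms by (simp add: W.m_assoc cancel)
    also have "\<dots> = e \<otimes>\<^bsub>W\<^esub> x [^]\<^bsub>W\<^esub> Suc n \<otimes>\<^bsub>W\<^esub> inv\<^bsub>W\<^esub> e"
      using assms by simp
    finally show ?case .
  qed
qed

lemma PP_single:
  assumes "c \<in> carrier G" "m < N" "v \<le> N"
  shows "PP G (\<lambda>m. if m = 0 then c else \<one>) (shiftp (N - 1) N) m v = (if m < v then c else \<one>)"
  using assms(2,3)
proof (induction v arbitrary: m)
  case 0 then show ?case by simp
next
  case (Suc v)
  show ?case
  proof (cases "m = 0")
    case True
    have "shiftp (N - 1) N 0 = N - 1" using Suc.prems by (simp add: shiftp_def)
    moreover have "\<not> (N - 1 < v)" using Suc.prems by simp
    ultimately show ?thesis using True Suc assms(1) by simp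
  next
    case False
    have "shiftp (N - 1) N m = m - 1" using Suc.prems False ar1[of m N 1] by (simp add: shiftp_def)
    then show ?thesis using False Suc assms(1) by auto
  qed
qed

lemma PP_single_out:
  assumes "N \<le> m" "0 < N"
  shows "PP G (\<lambda>m. if m = 0 then c else \<one>) (shiftp (N - 1) N) m v = \<one>"
  using assms by (induction v) (auto simp: shiftp_def)

end


context group
begin

lemma canon_root:
  fixes r k0 N :: nat
  assumes r: "0 < r" and k0: "0 < k0" and N: "N = r * k0"
    and g: "(F, shiftp r N) \<in> carrier (wrA G {0..<N})"
    and cj: "\<And>u. u < r \<Longrightarrow> \<exists>z\<in>carrier G. PP G F (shiftp (N - r) N) u k0
                 = z \<otimes> PP G F (shiftp (N - r) N) 0 k0 \<otimes> inv z"
  shows "\<exists>h\<in>carrier (wrA G {0..<N}). h [^]\<^bsub>wrA G {0..<N}\<^esub> r = (F, shiftp r N)"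
proof -
  interpret W: group "wrA G {0..<N}" by (rule wrA_group)
  have rN: "r \<le> N" using N k0 by simp
  have N0: "0 < N" using N r k0 by simp
  define q where "q = shiftp (N - r) N"
  have q: "pinv (shiftp r N) = q" using shiftp_pinv[OF rN] q_def by simp
  have cF: "\<And>i. F i \<in> carrier G" using g wrA_allc by blast
  have F1: "\<And>i. N \<le> i \<Longrightarrow> F i = \<one>" using g by (simp add: wrA_carrier)
  define c where "c = PP G F q 0 k0"
  have cc: "c \<in> carrier G" unfolding c_def by (rule PP_closed[OF cF])
  define y where "y = (\<lambda>u. SOME z. z \<in> carrier G \<and> PP G F q u k0 = z \<otimes> c \<otimes> inv z)"
  have y: "y u \<in> carrier G \<and> PP G F q u k0 = y u \<otimes> c \<otimes> inv (y u)" if "u < r" for u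
  proof -
    have "\<exists>z. z \<in> carrier G \<and> PP G F q u k0 = z \<otimes> c \<otimes> inv z"
      using cj[OF that] unfolding q_def c_def by blast
    then show ?thesis unfolding y_def by (rule someI_ex)
  qed
  have ym: "y (m mod r) \<in> carrier G" for m using y[of "m mod r"] r by simp
  define \<epsilon> where "\<epsilon> = (\<lambda>m. if m < N then PP G F q m (m div r) \<otimes> y (m mod r) else \<one>)"
  have \<epsilon>c: "\<epsilon> m \<in> carrier G" for m unfolding \<epsilon>_def using PP_closed[OF cF] ym by simp
  define e where "e = (\<epsilon>, id :: nat \<Rightarrow> nat)"
  have ec: "e \<in> carrier (wrA G {0..<N})"
  proof -
    have \<epsilon>1: "\<And>m. \<not> m < N \<Longrightarrow> \<epsilon> m = \<one>" unfolding \<epsilon>_def by simp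
    show ?thesis unfolding e_def wrA_carrier using \<epsilon>c \<epsilon>1 by (auto simp: permutes_id)
  qed
  define f0 where "f0 = (\<lambda>m. if m < r then c else \<one>)"
  define g0 where "g0 = (f0, shiftp r N)"
  have g0c: "g0 \<in> carrier (wrA G {0..<N})"
    unfolding g0_def wrA_carrier using cc rN shiftp_permutes[OF rN] by (auto simp: f0_def)
  have pt: "F m \<otimes> \<epsilon> (q m) = \<epsilon> m \<otimes> f0 m" for m
  proof (cases "m < N")
    case False
    then have "q m = m" unfolding q_def shiftp_def by simp
    moreover have "f0 m = \<one>" using False rN unfolding f0_def by simp
    ultimately show ?thesis using False F1[of m] unfolding \<epsilon>_def by simp
  next
    case True
    show ?thesis
    proof (cases "r \<le> m")
      case rm: True
      have qm: "q m = m - r" unfolding q_def shiftp_def using True ar1[OF True rm] by simp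
      have qN: "m - r < N" using True by simp
      have d: "(m - r) div r = m div r - 1" "(m - r) mod r = m mod r" using ar3[OF r rm] by simp_all
      have pos: "0 < m div r" using rm r by (simp add: div_greater_zero_iff)
      define t where "t = m div r - 1"
      have t: "m div r = Suc t" using pos t_def by simp
      have P: "PP G F q m (Suc t) = F m \<otimes> PP G F q (q m) t" by simp
      have e1: "\<epsilon> (q m) = PP G F q (q m) t \<otimes> y (m mod r)"
        unfolding \<epsilon>_def using qm qN d t_def by simp
      have "F m \<otimes> \<epsilon> (q m) = (F m \<otimes> PP G F q (q m) t) \<otimes> y (m mod r)"
        unfolding e1 by (simp add: m_assoc PP_closed[OF cF] cF ym)
      also have "\<dots> = PP G F q m (m div r) \<otimes> y (m mod r)" unfolding t P ..
      also have "\<dots> = \<epsilon> m" unfolding \<epsilon>_def using True by simp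
      finally have 1: "F m \<otimes> \<epsilon> (q m) = \<epsilon> m" .
      moreover have "f0 m = \<one>" using rm unfolding f0_def by simp
      ultimately show ?thesis using \<epsilon>c[of m] by simp
    next
      case mr: False
      then have mr: "m < r" by simp
      have qm: "q m = m + (N - r)" unfolding q_def shiftp_def using True ar2[OF mr rN] by simp
      have qN: "m + (N - r) < N" using mr rN by linarith
      have d: "(m + (N - r)) div r = k0 - 1" "(m + (N - r)) mod r = m" using ar4[OF mr k0] N by simp_all
      have t: "k0 = Suc (k0 - 1)" using k0 by simp
      have P: "PP G F q m k0 = F m \<otimes> PP G F q (q m) (k0 - 1)"
        by (subst t) simp
      have "F m \<otimes> \<epsilon> (q m) = F m \<otimes> (PP G F q (q m) (k0 - 1) \<otimes> y m)"
        unfolding \<epsilon>_def using qm qN d by simp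
      also have "\<dots> = PP G F q m k0 \<otimes> y m"
        using P by (simp add: m_assoc PP_closed[OF cF] cF y[OF mr])
      also have "\<dots> = y m \<otimes> c \<otimes> inv (y m) \<otimes> y m" using y[OF mr] by simp
      also have "\<dots> = y m \<otimes> c" using y[OF mr] cc by (simp add: m_assoc)
      finally have 1: "F m \<otimes> \<epsilon> (q m) = y m \<otimes> c" .
      have "\<epsilon> m = y m" unfolding \<epsilon>_def using True mr y[OF mr] by simp
      moreover have "f0 m = c" using mr unfolding f0_def by simp
      ultimately show ?thesis using 1 by simp
    qed
  qed
  have key: "(F, shiftp r N) \<otimes>\<^bsub>wrA G {0..<N}\<^esub> e = e \<otimes>\<^bsub>wrA G {0..<N}\<^esub> g0"
    unfolding wrA_mult e_def g0_def wr_mult_pair q using pt by (simp add: fun_eq_iff)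
  have gconj: "(F, shiftp r N) = e \<otimes>\<^bsub>wrA G {0..<N}\<^esub> g0 \<otimes>\<^bsub>wrA G {0..<N}\<^esub> inv\<^bsub>wrA G {0..<N}\<^esub> e"
  proof -
    have "(F, shiftp r N) = (F, shiftp r N) \<otimes>\<^bsub>wrA G {0..<N}\<^esub> e \<otimes>\<^bsub>wrA G {0..<N}\<^esub> inv\<^bsub>wrA G {0..<N}\<^esub> e"
      using g ec by (simp add: W.m_assoc)
    then show ?thesis using key by simp
  qed
  define f1 where "f1 = (\<lambda>m::nat. if m = 0 then c else \<one>)"
  define h0 where "h0 = (f1, shiftp 1 N)"
  have h0c: "h0 \<in> carrier (wrA G {0..<N})"
    unfolding h0_def wrA_carrier using cc N0 shiftp_permutes[of 1 N] by (auto simp: f1_def)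
  have h0r: "h0 [^]\<^bsub>wrA G {0..<N}\<^esub> r = g0"
  proof -
    have 1: "PP G f1 (shiftp (N - 1) N) m r = f0 m" for m
    proof (cases "m < N")
      case True then show ?thesis using PP_single[OF cc True rN] unfolding f1_def f0_def by simp
    next
      case False then show ?thesis using PP_single_out[where N=N and m=m and v=r and c=c] N0 rN unfolding f1_def f0_def by simp
    qed
    have pv: "pinv (shiftp 1 N) = shiftp (N - 1) N" using shiftp_pinv[of 1 N] N0 by simp
    have "h0 [^]\<^bsub>wrA G {0..<N}\<^esub> r = (\<lambda>i. PP G f1 (pinv (shiftp 1 N)) i r, shiftp 1 N ^^ r)"
      unfolding h0_def by (rule wrA_pow) (use h0c in \<open>simp add: h0_def\<close>)
    also have "\<dots> = g0" unfolding pv shiftp_funpow g0_def using 1 by (simp add: fun_eq_iff)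
    finally show ?thesis .
  qed
  define h where "h = e \<otimes>\<^bsub>wrA G {0..<N}\<^esub> h0 \<otimes>\<^bsub>wrA G {0..<N}\<^esub> inv\<^bsub>wrA G {0..<N}\<^esub> e"
  have hc: "h \<in> carrier (wrA G {0..<N})" unfolding h_def using ec h0c by simp
  have "h [^]\<^bsub>wrA G {0..<N}\<^esub> r = (F, shiftp r N)"
    unfolding h_def conj_pow_W[OF wrA_group ec h0c] h0r using gconj by simp
  then show ?thesis using hc by blast
qed

end


definition Phi :: "('a, 'b) monoid_scheme \<Rightarrow> (nat \<Rightarrow> nat) \<Rightarrow> nat \<Rightarrow> nat set \<Rightarrow> (nat \<Rightarrow> 'a) \<times> (nat \<Rightarrow> nat) \<Rightarrow> (nat \<Rightarrow> 'a) \<times> (nat \<Rightarrow> nat)" where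
  "Phi G \<beta> N B x = (\<lambda>i. if i \<in> B then fst x (inv_into {0..<N} \<beta> i) else \<one>\<^bsub>G\<^esub>,
                    \<lambda>i. if i \<in> B then \<beta> (snd x (inv_into {0..<N} \<beta> i)) else i)"

locale wr_transp = group G for G (structure) +
  fixes \<beta> :: "nat \<Rightarrow> nat" and N :: nat and B :: "nat set"
  assumes bij: "bij_betw \<beta> {0..<N} B"
begin

abbreviation "\<beta>' \<equiv> inv_into {0..<N} \<beta>"

lemma b1: "i \<in> B \<Longrightarrow> \<beta>' i < N" using bij
  by (metis atLeastLessThan_iff bij_betw_def inv_into_into)
lemma b2: "i \<in> B \<Longrightarrow> \<beta> (\<beta>' i) = i" using bij
  by (meson bij_betw_inv_into_right)
lemma b3: "m < N \<Longrightarrow> \<beta>' (\<beta> m) = m" using bij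
  by (simp add: bij_betw_inv_into_left)
lemma b4: "m < N \<Longrightarrow> \<beta> m \<in> B" using bij
  by (meson atLeastLessThan_iff bij_betwE zero_le)

lemma Phi_perm_permutes:
  assumes "p permutes {0..<N}"
  shows "(\<lambda>i. if i \<in> B then \<beta> (p (\<beta>' i)) else i) permutes B"
proof (rule bij_imp_permutes)
  have "bij_betw (\<beta> \<circ> (p \<circ> \<beta>')) B B"
    by (rule bij_betw_trans[OF bij_betw_trans[OF bij_betw_inv_into[OF bij] permutes_imp_bij[OF assms]] bij])
  then show "bij_betw (\<lambda>i. if i \<in> B then \<beta> (p (\<beta>' i)) else i) B B"
    by (rule bij_betw_cong[THEN iffD1, rotated]) auto
qed auto

lemma Phi_carrier:
  assumes "x \<in> carrier (wrA G {0..<N})"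
  shows "Phi G \<beta> N B x \<in> carrier (wrA G B)"
proof -
  obtain f p where x: "x = (f, p)" by (cases x)
  have p: "p permutes {0..<N}" using assms x by (simp add: wrA_carrier)
  have c: "\<And>i. f i \<in> carrier G" using assms x wrA_allc by blast
  show ?thesis unfolding x Phi_def fst_conv snd_conv wrA_carrier
    using Phi_perm_permutes[OF p] c by auto
qed

lemma Phi_pinv:
  assumes "p permutes {0..<N}"
  shows "pinv (\<lambda>i. if i \<in> B then \<beta> (p (\<beta>' i)) else i) i = (if i \<in> B then \<beta> (pinv p (\<beta>' i)) else i)"
proof (rule inv_f_eq[OF permutes_inj[OF Phi_perm_permutes[OF assms]]])
  show "(if (if i \<in> B then \<beta> (pinv p (\<beta>' i)) else i) \<in> B then \<beta> (p (\<beta>' (if i \<in> B then \<beta> (pinv p (\<beta>' i)) else i)))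
        else (if i \<in> B then \<beta> (pinv p (\<beta>' i)) else i)) = i"
  proof (cases "i \<in> B")
    case True
    have "pinv p (\<beta>' i) < N" using permutes_in_image[OF permutes_inv[OF assms]] b1[OF True] by simp
    then have 1: "\<beta> (pinv p (\<beta>' i)) \<in> B" "\<beta>' (\<beta> (pinv p (\<beta>' i))) = pinv p (\<beta>' i)"
      using b3 b4 by auto
    have "p (pinv p (\<beta>' i)) = \<beta>' i" using permutes_inverses(1)[OF assms] by simp
    then show ?thesis using True 1 b2[OF True] by simp
  next
    case False then show ?thesis by simp
  qed
qed

lemma Phi_mult:
  assumes "x \<in> carrier (wrA G {0..<N})" "y \<in> carrier (wrA G {0..<N})"
  shows "Phi G \<beta> N B (wr_mult G x y) = wr_mult G (Phi G \<beta> N B x) (Phi G \<beta> N B y)"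
proof -
  obtain f1 p1 where x: "x = (f1, p1)" by (cases x)
  obtain f2 p2 where y: "y = (f2, p2)" by (cases y)
  have p1: "p1 permutes {0..<N}" using assms x by (simp add: wrA_carrier)
  have p2: "p2 permutes {0..<N}" using assms y by (simp add: wrA_carrier)
  have e1: "(if i \<in> B then f1 (\<beta>' i) \<otimes> f2 (pinv p1 (\<beta>' i)) else \<one>) =
    (if i \<in> B then f1 (\<beta>' i) else \<one>) \<otimes>
    (if pinv (\<lambda>i. if i \<in> B then \<beta> (p1 (\<beta>' i)) else i) i \<in> B
     then f2 (\<beta>' (pinv (\<lambda>i. if i \<in> B then \<beta> (p1 (\<beta>' i)) else i) i)) else \<one>)" for i
  proof (cases "i \<in> B")
    case True
    have "pinv p1 (\<beta>' i) < N" using permutes_in_image[OF permutes_inv[OF p1]] b1[OF True] by simp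
    then show ?thesis using True Phi_pinv[OF p1, of i] b3 b4 by simp
  next
    case False then show ?thesis using Phi_pinv[OF p1, of i] by simp
  qed
  have e2: "(if i \<in> B then \<beta> (p1 (p2 (\<beta>' i))) else i) =
     (if (if i \<in> B then \<beta> (p2 (\<beta>' i)) else i) \<in> B
      then \<beta> (p1 (\<beta>' (if i \<in> B then \<beta> (p2 (\<beta>' i)) else i)))
      else (if i \<in> B then \<beta> (p2 (\<beta>' i)) else i))" for i
  proof (cases "i \<in> B")
    case True
    have "p2 (\<beta>' i) < N" using permutes_in_image[OF p2] b1[OF True] by simp
    then show ?thesis using True b3 b4 by simp
  next
    case False then show ?thesis by simp
  qed
  show ?thesis unfolding x y Phi_def wr_mult_pair fst_conv snd_conv comp_def
    apply (simp only: prod.inject)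
    apply (intro conjI ext)
     apply (rule e1)
    apply (rule e2)
    done
qed

lemma Phi_one: "Phi G \<beta> N B (\<lambda>_. \<one>, id) = (\<lambda>_. \<one>, id)"
  unfolding Phi_def by (auto simp: fun_eq_iff b2)

lemma Phi_pow:
  assumes "x \<in> carrier (wrA G {0..<N})"
  shows "Phi G \<beta> N B (x [^]\<^bsub>wrA G {0..<N}\<^esub> (n::nat)) = Phi G \<beta> N B x [^]\<^bsub>wrA G B\<^esub> n"
proof (induction n)
  case 0 then show ?case by (simp add: wrA_one Phi_one)
next
  case (Suc n)
  interpret W: group "wrA G {0..<N}" by (rule wrA_group)
  have "x [^]\<^bsub>wrA G {0..<N}\<^esub> n \<in> carrier (wrA G {0..<N})" using assms by simp
  then show ?case using Suc Phi_mult[OF _ assms] by (simp add: wrA_mult)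
qed

lemma transport_root:
  fixes r k0 :: nat
  assumes r: "0 < r" and k0: "0 < k0" and N: "N = r * k0"
    and g: "(F, \<sigma>) \<in> carrier (wrA G B)"
    and comm: "\<And>m. m < N \<Longrightarrow> \<sigma> (\<beta> m) = \<beta> (shiftp r N m)"
    and cj: "\<And>u. u < r \<Longrightarrow> \<exists>z\<in>carrier G. PP G F (pinv \<sigma>) (\<beta> u) k0 = z \<otimes> PP G F (pinv \<sigma>) (\<beta> 0) k0 \<otimes> inv z"
  shows "\<exists>h\<in>carrier (wrA G B). h [^]\<^bsub>wrA G B\<^esub> r = (F, \<sigma>)"
proof -
  have rN: "r \<le> N" using N k0 by simp
  have N0: "0 < N" using N r k0 by simp
  have sp: "\<sigma> permutes B" using g by (simp add: wrA_carrier)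
  have cF: "\<And>i. F i \<in> carrier G" using g wrA_allc by blast
  have F1: "\<And>i. i \<notin> B \<Longrightarrow> F i = \<one> \<and> \<sigma> i = i" using g wrA_mem_fix by blast
  define F' where "F' = (\<lambda>m. if m < N then F (\<beta> m) else \<one>)"
  have g': "(F', shiftp r N) \<in> carrier (wrA G {0..<N})"
    unfolding wrA_carrier F'_def using cF shiftp_permutes[OF rN] by auto
  define q where "q = shiftp (N - r) N"
  have pq: "pinv \<sigma> (\<beta> x) = \<beta> (q x)" if "x < N" for x
  proof -
    have qx: "q x < N" unfolding q_def shiftp_def using that N0 by simp
    have "\<sigma> (\<beta> (q x)) = \<beta> x" using comm[OF qx] unfolding q_def shiftp_comp using rN that
      by (simp add: shiftp_N)
    then show ?thesis using permutes_inj[OF sp] by (intro inv_f_eq) auto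
  qed
  have PPe: "PP G F' q u k0 = PP G F (pinv \<sigma>) (\<beta> u) k0" if "u < N" for u
  proof (rule PP_transport[where B'="{0..<N}"])
    show "u \<in> {0..<N}" using that by simp
    fix x assume "x \<in> {0..<N}"
    then have x: "x < N" by simp
    show "q x \<in> {0..<N} \<and> F' x = F (\<beta> x) \<and> pinv \<sigma> (\<beta> x) = \<beta> (q x)"
      using pq[OF x] x N0 unfolding q_def shiftp_def F'_def by simp
  qed
  have cj': "\<exists>z\<in>carrier G. PP G F' (shiftp (N - r) N) u k0 = z \<otimes> PP G F' (shiftp (N - r) N) 0 k0 \<otimes> inv z"
    if "u < r" for u
    using cj[OF that] PPe[of u] PPe[of 0] that rN N0 unfolding q_def by simp
  obtain h' where h': "h' \<in> carrier (wrA G {0..<N})" "h' [^]\<^bsub>wrA G {0..<N}\<^esub> r = (F', shiftp r N)"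
    using canon_root[OF r k0 N g' cj'] by blast
  have PhiG: "Phi G \<beta> N B (F', shiftp r N) = (F, \<sigma>)"
  proof -
    have 1: "(if i \<in> B then F' (\<beta>' i) else \<one>) = F i" for i
      using b1[of i] b2[of i] F1[of i] unfolding F'_def by auto
    have 2: "(if i \<in> B then \<beta> (shiftp r N (\<beta>' i)) else i) = \<sigma> i" for i
      using b1[of i] b2[of i] F1[of i] comm[of "\<beta>' i"] by auto
    show ?thesis unfolding Phi_def fst_conv snd_conv using 1 2 by (simp add: fun_eq_iff)
  qed
  have "Phi G \<beta> N B h' [^]\<^bsub>wrA G B\<^esub> r = (F, \<sigma>)"
    using Phi_pow[OF h'(1), of r] h'(2) PhiG by simp
  then show ?thesis using Phi_carrier[OF h'(1)] by blast
qed

end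


lemma ar5:
  fixes m r k0 :: nat
  assumes "0 < r" "m < r * k0" "m div r + 1 < k0"
  shows "(m + r) mod (r * k0) = m + r" "(m + r) div r = m div r + 1" "(m + r) mod r = m mod r"
proof -
  have m: "m = r * (m div r) + m mod r" by simp
  have "m mod r < r" using assms(1) by simp
  then have "m + r < r * (m div r) + 2 * r" using m by linarith
  also have "\<dots> = r * (m div r + 2)" by (simp add: algebra_simps)
  also have "\<dots> \<le> r * k0" using assms(3) by (intro mult_le_mono2) simp
  finally show "(m + r) mod (r * k0) = m + r" by simp
  show "(m + r) div r = m div r + 1" using assms(1) by simp
  show "(m + r) mod r = m mod r" by simp
qed

lemma ar6:
  fixes m r k0 :: nat
  assumes "0 < r" "m < r * k0" "m div r + 1 = k0"
  shows "(m + r) mod (r * k0) = m mod r"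
proof -
  have m: "m = r * (m div r) + m mod r" by simp
  have "m + r = m mod r + r * k0" using m assms(3) by (metis add.commute add.left_commute mult_Suc_right Suc_eq_plus1)
  moreover have "m mod r < r * k0" using assms by (meson le_less_trans mod_less_eq_dividend)
  ultimately show ?thesis by simp
qed

context group
begin

lemma restr_cp:
  assumes "(F, \<sigma>) \<in> carrier (wrA G A)" "finite A" "B \<subseteq> A" "\<And>i. i \<in> B \<Longrightarrow> \<sigma> i \<in> B" "j \<in> B"
  shows "PP G (\<lambda>i. if i \<in> B then F i else \<one>) (pinv (\<lambda>i. if i \<in> B then \<sigma> i else i)) j k = PP G F (pinv \<sigma>) j k"
proof (rule PP_transport[where \<beta>="\<lambda>x. x" and B'=B, OF assms(5)])
  have sp: "\<sigma> permutes A" using assms(1) by (simp add: wrA_carrier)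
  fix x assume x: "x \<in> B"
  show "pinv (\<lambda>i. if i \<in> B then \<sigma> i else i) x \<in> B \<and> (if x \<in> B then F x else \<one>) = F x \<and>
        pinv \<sigma> x = pinv (\<lambda>i. if i \<in> B then \<sigma> i else i) x"
    using restr_pinv[OF sp assms(2,3,4) x] x by simp
qed

lemma Jset_cycle:
  assumes g: "(F, \<sigma>) \<in> carrier (wrA G A)" and fin: "finite A" and C: "C \<in> conj_classes G"
    and i: "i \<in> Jset G A (F, \<sigma>) C k"
  shows "(\<sigma> ^^ t) i \<in> Jset G A (F, \<sigma>) C k"
proof -
  have sp: "\<sigma> permutes A" using g by (simp add: wrA_carrier)
  have pm: "permutation \<sigma>" using sp fin permutation_permutes by blast
  have inA: "\<And>i. i \<in> A \<Longrightarrow> \<sigma> i \<in> A" using sp by (simp add: permutes_in_image)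
  have iA: "i \<in> A" "card (perm_cycle \<sigma> i) = k" "cycle_prod G F \<sigma> i k \<in> C" using i unfolding Jset_def by auto
  have "(\<sigma> ^^ t) i \<in> A \<and> card (perm_cycle \<sigma> ((\<sigma> ^^ t) i)) = k \<and>
        ((cycle_prod G F \<sigma> ((\<sigma> ^^ t) i) k \<in> C) = (cycle_prod G F \<sigma> i k \<in> C))"
    by (rule cycle_invar[where Q="\<lambda>j. cycle_prod G F \<sigma> j k \<in> C", OF pm _ inA iA(1) iA(2)])
       (rule cp_invar[OF g fin C])
  then show ?thesis using iA unfolding Jset_def by simp
qed

lemma backward:
  fixes r :: nat
  assumes fG: "finite (carrier G)" and pr: "Factorial_Ring.prime r" and nG: "\<not> r dvd order G"
  shows "finite A \<Longrightarrow> g \<in> carrier (wrA G A) \<Longrightarrow>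
    (\<forall>C\<in>conj_classes G. \<forall>k. 0 < k \<longrightarrow> r dvd k \<longrightarrow> r * k dvd card (Jset G A g C k)) \<Longrightarrow>
    \<exists>h\<in>carrier (wrA G A). h [^]\<^bsub>wrA G A\<^esub> r = g"
proof (induction "card A" arbitrary: A g rule: less_induct)
  case less
  note fin = less.prems(1) and gc = less.prems(2) and cond = less.prems(3)
  interpret W: group "wrA G A" by (rule wrA_group)
  obtain F \<sigma> where g: "g = (F, \<sigma>)" by (cases g)
  have gc': "(F, \<sigma>) \<in> carrier (wrA G A)" using gc g by simp
  have sp: "\<sigma> permutes A" using gc' by (simp add: wrA_carrier)
  have pm: "permutation \<sigma>" using sp fin permutation_permutes by blast
  have r0: "0 < r" using pr prime_gt_0_nat by blast
  show ?case
  proof (cases "A = {}")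
    case True
    have "F = (\<lambda>_. \<one>)" using gc' True by (auto simp: wrA_carrier fun_eq_iff)
    moreover have "\<sigma> = id" using sp True by (simp add: permutes_empty)
    ultimately have "g = \<one>\<^bsub>wrA G A\<^esub>" using g by (simp add: wrA_one)
    then show ?thesis by (intro bexI[of _ "\<one>\<^bsub>wrA G A\<^esub>"]) simp_all
  next
    case nonempty: False
    show ?thesis
    proof (cases "\<exists>j\<in>A. \<not> r dvd per \<sigma> j")
      case True
      then obtain j where j: "j \<in> A" "\<not> r dvd per \<sigma> j" by blast
      define D where "D = perm_cycle \<sigma> j"
      have DA: "D \<subseteq> A" using perm_cycle_subset[OF sp j(1)] D_def by simp
      have invD: "\<And>i. i \<in> D \<Longrightarrow> \<sigma> i \<in> D"
      proof -
        fix i assume "i \<in> D"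
        then obtain t where "i = (\<sigma> ^^ t) j" using D_def unfolding perm_cycle_def by auto
        then have "\<sigma> i = (\<sigma> ^^ Suc t) j" by simp
        then show "\<sigma> i \<in> D" using D_def perm_cycle_funpow by metis
      qed
      obtain h1 where h1: "h1 \<in> carrier (wrA G D)" "h1 [^]\<^bsub>wrA G D\<^esub> r = restr G (F, \<sigma>) D"
        using coprime_cycle_root[OF fG gc' fin j(1) pr j(2) nG D_def] by blast
      have sub: "A - D \<subseteq> A" by auto
      have invAD: "\<And>i. i \<in> A - D \<Longrightarrow> \<sigma> i \<in> A - D"
        using compl_invariant[OF sp fin DA invD] by blast
      have card_lt: "card (A - D) < card A"
        using fin DA perm_cycle_self[of j \<sigma>] D_def j(1) by (intro psubset_card_mono) auto
      have gc2: "restr G g (A - D) \<in> carrier (wrA G (A - D))"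
        using restr_carrier[OF gc fin sub] invAD g by simp
      have cond2: "\<forall>C\<in>conj_classes G. \<forall>k. 0 < k \<longrightarrow> r dvd k \<longrightarrow> r * k dvd card (Jset G (A - D) (restr G g (A - D)) C k)"
      proof (intro ballI allI impI)
        fix C k assume C: "C \<in> conj_classes G" and k: "0 < k" "r dvd k"
        have "Jset G (A - D) (restr G g (A - D)) C k = Jset G A g C k \<inter> (A - D)"
          using restr_Jset[OF gc fin sub] invAD g by simp
        also have "\<dots> = Jset G A g C k"
        proof -
          have "Jset G A g C k \<inter> D = {}"
          proof (rule ccontr)
            assume "Jset G A g C k \<inter> D \<noteq> {}"
            then obtain i where i: "i \<in> D" "card (perm_cycle \<sigma> i) = k" unfolding Jset_def g by auto
            have "perm_cycle \<sigma> i = perm_cycle \<sigma> j" using perm_cycle_eq[OF pm] i(1) D_def by simp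
            then have "per \<sigma> j = k" using i(2) perm_cycle_card[OF pm] by metis
            then show False using j(2) k(2) by simp
          qed
          moreover have "Jset G A g C k \<subseteq> A" unfolding Jset_def by auto
          ultimately show ?thesis by auto
        qed
        finally show "r * k dvd card (Jset G (A - D) (restr G g (A - D)) C k)"
          using cond C k by simp
      qed
      obtain h2 where h2: "h2 \<in> carrier (wrA G (A - D))" "h2 [^]\<^bsub>wrA G (A - D)\<^esub> r = restr G g (A - D)"
        using less.hyps[OF card_lt _ gc2 cond2] fin by blast
      show ?thesis
        by (rule combine[OF gc fin DA _ h1(1) _ h2]) (use invD g h1(2) h2(2) in simp_all)
    next
      case False
      then have alldvd: "\<And>j. j \<in> A \<Longrightarrow> r dvd per \<sigma> j" by blast
      obtain j0 where j0: "j0 \<in> A" using nonempty by blast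
      define k0 where "k0 = per \<sigma> j0"
      have k0: "0 < k0" "r dvd k0" using per_fix[OF pm] alldvd[OF j0] k0_def by auto
      have cF: "\<And>i. F i \<in> carrier G" using gc' wrA_allc by blast
      define C0 where "C0 = conj_class G (cycle_prod G F \<sigma> j0 k0)"
      have cpc: "cycle_prod G F \<sigma> j0 k0 \<in> carrier G" unfolding cycle_prod_PP by (rule PP_closed[OF cF])
      have C0: "C0 \<in> conj_classes G" unfolding C0_def conj_classes_def using cpc by simp
      define J where "J = Jset G A g C0 k0"
      have j0J: "j0 \<in> J" unfolding J_def Jset_def g
        using j0 perm_cycle_card[OF pm] k0_def conj_class_self[OF cpc] C0_def by simp
      have finJ: "finite J" unfolding J_def Jset_def using fin by simp
      have dvdJ: "r * k0 dvd card J" using cond C0 k0 J_def by simp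
      have "card J > 0" using finJ j0J card_gt_0_iff by blast
      then have rkJ: "r * k0 \<le> card J" using dvdJ by (simp add: dvd_imp_le)
      define S where "S = {c. \<exists>j\<in>A. c = perm_cycle \<sigma> j \<and> card c = k0 \<and> cycle_prod G F \<sigma> j k0 \<in> C0}"
      have SJ: "card S * k0 = card J"
        using type_count[OF gc fin C0, of k0] unfolding S_def J_def g by simp
      have rS: "r \<le> card S" using rkJ SJ k0(1) by (metis mult.commute mult_le_cancel2)
      obtain S' where S': "S' \<subseteq> S" "card S' = r" "finite S'" using obtain_subset_with_card_n[OF rS] by blast
      obtain ee where ee: "bij_betw ee {0..<r} S'" using ex_bij_betw_nat_finite[OF S'(3)] S'(2) by auto
      have "\<forall>u. \<exists>j. u < r \<longrightarrow> (j \<in> A \<and> ee u = perm_cycle \<sigma> j \<and> card (ee u) = k0 \<and> cycle_prod G F \<sigma> j k0 \<in> C0)"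
      proof
        fix u
        show "\<exists>j. u < r \<longrightarrow> (j \<in> A \<and> ee u = perm_cycle \<sigma> j \<and> card (ee u) = k0 \<and> cycle_prod G F \<sigma> j k0 \<in> C0)"
        proof (cases "u < r")
          case True
          then have "ee u \<in> S" using ee S'(1) bij_betwE by fastforce
          then show ?thesis unfolding S_def by auto
        qed simp
      qed
      then obtain a where a: "\<And>u. u < r \<Longrightarrow> a u \<in> A \<and> ee u = perm_cycle \<sigma> (a u) \<and> card (ee u) = k0 \<and> cycle_prod G F \<sigma> (a u) k0 \<in> C0"
        by metis
      have pa: "per \<sigma> (a u) = k0" if "u < r" for u
        using a[OF that] perm_cycle_card[OF pm] by metis
      have aJ: "a u \<in> J" if "u < r" for u
      proof -
        have "card (perm_cycle \<sigma> (a u)) = k0" using a[OF that] by metis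
        then show ?thesis unfolding J_def Jset_def g using a[OF that] by simp
      qed
      define N where "N = r * k0"
      define \<beta> where "\<beta> = (\<lambda>m. (\<sigma> ^^ (m div r)) (a (m mod r)))"
      have mr: "m mod r < r" for m using r0 by simp
      have \<beta>J: "\<beta> m \<in> J" for m
        unfolding \<beta>_def J_def g using Jset_cycle[OF gc' fin C0 aJ[OF mr, unfolded J_def g]] by simp
      have JA: "J \<subseteq> A" unfolding J_def Jset_def by auto
      have \<beta>cyc: "\<beta> m \<in> perm_cycle \<sigma> (a (m mod r))" for m
        unfolding \<beta>_def by (rule perm_cycle_funpow)
      have inj: "inj_on \<beta> {0..<N}"
      proof (rule inj_onI)
        fix m1 m2 assume m1: "m1 \<in> {0..<N}" and m2: "m2 \<in> {0..<N}" and eq: "\<beta> m1 = \<beta> m2"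
        have "perm_cycle \<sigma> (\<beta> m1) = ee (m1 mod r)"
          using perm_cycle_eq[OF pm \<beta>cyc[of m1]] a[OF mr[of m1]] by simp
        moreover have "perm_cycle \<sigma> (\<beta> m2) = ee (m2 mod r)"
          using perm_cycle_eq[OF pm \<beta>cyc[of m2]] a[OF mr[of m2]] by simp
        ultimately have "ee (m1 mod r) = ee (m2 mod r)" using eq by simp
        then have u: "m1 mod r = m2 mod r"
          using ee mr unfolding bij_betw_def inj_on_def by auto
        have "(\<sigma> ^^ (m1 div r)) (a (m1 mod r)) = (\<sigma> ^^ (m2 div r)) (a (m1 mod r))"
          using eq u unfolding \<beta>_def by simp
        then have "m1 div r mod k0 = m2 div r mod k0"
          using funpow_eq_mod[OF pm] pa[OF mr] by metis
        moreover have "m1 div r < k0" "m2 div r < k0"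
          using m1 m2 unfolding N_def by (simp_all add: less_mult_imp_div_less mult.commute)
        ultimately have "m1 div r = m2 div r" by simp
        then show "m1 = m2" using u by (metis div_mult_mod_eq)
      qed
      have comm: "\<sigma> (\<beta> m) = \<beta> (shiftp r N m)" if m: "m < N" for m
      proof (cases "m div r + 1 < k0")
        case True
        have e: "shiftp r N m = m + r" "(m + r) div r = m div r + 1" "(m + r) mod r = m mod r"
          using ar5[OF r0 m[unfolded N_def] True] m unfolding shiftp_def N_def by simp_all
        show ?thesis unfolding \<beta>_def e by simp
      next
        case False
        have mk: "m div r < k0" using m unfolding N_def by (simp add: less_mult_imp_div_less mult.commute)
        then have t: "m div r + 1 = k0" using False by simp
        have e: "shiftp r N m = m mod r" using ar6[OF r0 m[unfolded N_def] t] m unfolding shiftp_def N_def by simp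
        have "\<sigma> (\<beta> m) = (\<sigma> ^^ k0) (a (m mod r))" unfolding \<beta>_def using t by (metis funpow.simps(2) comp_apply Suc_eq_plus1)
        also have "\<dots> = a (m mod r)" using per_fix[OF pm, of "a (m mod r)"] pa[OF mr] by simp
        also have "\<dots> = \<beta> (m mod r)" unfolding \<beta>_def using r0 by simp
        finally show ?thesis using e by simp
      qed
      define B where "B = \<beta> ` {0..<N}"
      have bijB: "bij_betw \<beta> {0..<N} B" using inj B_def by (simp add: bij_betw_def)
      have BJ: "B \<subseteq> J" using \<beta>J B_def by auto
      have BA: "B \<subseteq> A" using BJ JA by auto
      have cardB: "card B = N" using bijB by (simp add: bij_betw_same_card[symmetric])
      have N0: "0 < N" using r0 k0 N_def by simp
      have invB: "\<And>i. i \<in> B \<Longrightarrow> \<sigma> i \<in> B"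
      proof -
        fix i assume "i \<in> B"
        then obtain m where m: "m < N" "i = \<beta> m" unfolding B_def by auto
        have "shiftp r N m < N" using m N0 unfolding shiftp_def by simp
        then show "\<sigma> i \<in> B" using comm[OF m(1)] m(2) unfolding B_def by auto
      qed
      interpret T: wr_transp G \<beta> N B by unfold_locales (rule bijB)
      define FB where "FB = (\<lambda>i. if i \<in> B then F i else \<one>)"
      define \<sigma>B where "\<sigma>B = (\<lambda>i. if i \<in> B then \<sigma> i else i)"
      have rB: "restr G g B = (FB, \<sigma>B)" unfolding restr_def g FB_def \<sigma>B_def fst_conv snd_conv by simp
      have gB: "(FB, \<sigma>B) \<in> carrier (wrA G B)" using restr_carrier[OF gc fin BA] invB g rB by simp
      have commB: "\<sigma>B (\<beta> m) = \<beta> (shiftp r N m)" if "m < N" for m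
        using comm[OF that] that unfolding \<sigma>B_def B_def by simp
      have \<beta>u: "\<beta> u = a u" if "u < r" for u unfolding \<beta>_def using that by simp
      have cjB: "\<exists>z\<in>carrier G. PP G FB (pinv \<sigma>B) (\<beta> u) k0 = z \<otimes> PP G FB (pinv \<sigma>B) (\<beta> 0) k0 \<otimes> inv z"
        if u: "u < r" for u
      proof -
        have uN: "u < N" "0 < N" using u r0 N0 N_def k0 by (simp_all add: less_le_trans[of u r "r * k0"])
        have bu: "\<beta> u \<in> B" "\<beta> 0 \<in> B" unfolding B_def using uN by simp_all
        have 1: "PP G FB (pinv \<sigma>B) (\<beta> u) k0 = cycle_prod G F \<sigma> (a u) k0"
          unfolding FB_def \<sigma>B_def cycle_prod_PP using restr_cp[OF gc' fin BA invB bu(1), of k0] \<beta>u[OF u]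
          by simp
        have 2: "PP G FB (pinv \<sigma>B) (\<beta> 0) k0 = cycle_prod G F \<sigma> (a 0) k0"
          unfolding FB_def \<sigma>B_def cycle_prod_PP using restr_cp[OF gc' fin BA invB bu(2), of k0] \<beta>u[OF r0]
          by simp
        show ?thesis using classes_rel[OF C0] a[OF u] a[OF r0] 1 2 by metis
      qed
      obtain h1 where h1: "h1 \<in> carrier (wrA G B)" "h1 [^]\<^bsub>wrA G B\<^esub> r = (FB, \<sigma>B)"
        using T.transport_root[OF r0 k0(1) N_def gB commB cjB] by blast
      have sub: "A - B \<subseteq> A" by auto
      have invAB: "\<And>i. i \<in> A - B \<Longrightarrow> \<sigma> i \<in> A - B"
        using compl_invariant[OF sp fin BA invB] by blast
      have card_lt: "card (A - B) < card A"
      proof -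
        have "\<beta> 0 \<in> B" using N0 B_def by simp
        then show ?thesis using fin BA by (intro psubset_card_mono) auto
      qed
      have gc2: "restr G g (A - B) \<in> carrier (wrA G (A - B))"
        using restr_carrier[OF gc fin sub] invAB g by simp
      have cond2: "\<forall>C\<in>conj_classes G. \<forall>k. 0 < k \<longrightarrow> r dvd k \<longrightarrow> r * k dvd card (Jset G (A - B) (restr G g (A - B)) C k)"
      proof (intro ballI allI impI)
        fix C k assume C: "C \<in> conj_classes G" and k: "0 < k" "r dvd k"
        have JJ: "Jset G (A - B) (restr G g (A - B)) C k = Jset G A g C k - B"
        proof -
          have "Jset G (A - B) (restr G g (A - B)) C k = Jset G A g C k \<inter> (A - B)"
            using restr_Jset[OF gc fin sub] invAB g by simp
          moreover have "Jset G A g C k \<subseteq> A" unfolding Jset_def by auto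
          ultimately show ?thesis by auto
        qed
        have fJ: "finite (Jset G A g C k)" unfolding Jset_def using fin by simp
        show "r * k dvd card (Jset G (A - B) (restr G g (A - B)) C k)"
        proof (cases "C = C0 \<and> k = k0")
          case True
          then have "card (Jset G A g C k - B) = card J - card B"
            using BJ J_def fJ by (simp add: card_Diff_subset finite_subset)
          moreover have "r * k dvd card J" using dvdJ True by simp
          moreover have "r * k dvd card B" using cardB True N_def by simp
          ultimately show ?thesis using JJ by (simp add: dvd_diff_nat)
        next
          case False
          have "Jset G A g C k \<inter> B = {}"
          proof (rule ccontr)
            assume "Jset G A g C k \<inter> B \<noteq> {}"
            then obtain i where i: "i \<in> Jset G A g C k" "i \<in> J" using BJ by blast
            then have "k = k0" "cycle_prod G F \<sigma> i k0 \<in> C" "cycle_prod G F \<sigma> i k0 \<in> C0"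
              unfolding J_def Jset_def g by auto
            then show False using classes_disj[OF C C0] False by blast
          qed
          then have "Jset G A g C k - B = Jset G A g C k" by auto
          then show ?thesis using JJ cond C k by simp
        qed
      qed
      obtain h2 where h2: "h2 \<in> carrier (wrA G (A - B))" "h2 [^]\<^bsub>wrA G (A - B)\<^esub> r = restr G g (A - B)"
        using less.hyps[OF card_lt _ gc2 cond2] fin by blast
      show ?thesis
        by (rule combine[OF gc fin BA _ h1(1) _ h2]) (use invB g h1(2) h2(2) rB in simp_all)
    qed
  qed
qed

end


theorem corollary4p4:
  fixes G :: "('a, 'b) monoid_scheme" and n r :: nat and g :: "(nat \<Rightarrow> 'a) \<times> (nat \<Rightarrow> nat)"
  assumes "group G" and "finite (carrier G)"
    and "Factorial_Ring.prime r" and "\<not> r dvd order G"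
    and "g \<in> carrier (wreath G n)"
  shows "(\<exists>h \<in> carrier (wreath G n). h [^]\<^bsub>wreath G n\<^esub> r = g) \<longleftrightarrow>
         (\<forall>C \<in> conj_classes G. \<forall>k \<in> {1..n}. r dvd k \<longrightarrow> r dvd wr_type G n g C k)"
proof -
  interpret group G by fact
  have gc: "g \<in> carrier (wrA G {1..n})" using assms(5) unfolding wreath_eq .
  have fin: "finite {1..n}" by simp
  have tc: "wr_type G n g C k * k = card (Jset G {1..n} g C k)" if "C \<in> conj_classes G" for C k
    unfolding wr_type_def using type_count[OF gc fin that, of k] by simp
  show ?thesis unfolding wreath_eq
  proof
    assume "\<exists>h\<in>carrier (wrA G {1..n}). h [^]\<^bsub>wrA G {1..n}\<^esub> r = g"
    then obtain h where h: "h \<in> carrier (wrA G {1..n})" "h [^]\<^bsub>wrA G {1..n}\<^esub> r = g" by blast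
    obtain f p where hp: "h = (f, p)" by (cases h)
    show "\<forall>C \<in> conj_classes G. \<forall>k \<in> {1..n}. r dvd k \<longrightarrow> r dvd wr_type G n g C k"
    proof (intro ballI impI)
      fix C k assume C: "C \<in> conj_classes G" and k: "k \<in> {1..n}" and rk: "r dvd k"
      have k0: "0 < k" using k by simp
      have "r * k dvd card (Jset G {1..n} g C k)"
        using forward[OF h(1)[unfolded hp] fin assms(3) C k0 rk] h(2) hp by simp
      then have "k * r dvd k * wr_type G n g C k" using tc[OF C] by (simp add: mult.commute)
      then show "r dvd wr_type G n g C k" using k0 by (simp add: nat_mult_dvd_cancel_disj)
    qed
  next
    assume R: "\<forall>C \<in> conj_classes G. \<forall>k \<in> {1..n}. r dvd k \<longrightarrow> r dvd wr_type G n g C k"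
    have cond: "\<forall>C\<in>conj_classes G. \<forall>k. 0 < k \<longrightarrow> r dvd k \<longrightarrow> r * k dvd card (Jset G {1..n} g C k)"
    proof (intro ballI allI impI)
      fix C k assume C: "C \<in> conj_classes G" and k0: "0 < k" and rk: "r dvd k"
      show "r * k dvd card (Jset G {1..n} g C k)"
      proof (cases "k \<le> n")
        case True
        then have "r dvd wr_type G n g C k" using R C k0 rk by simp
        then have "r * k dvd wr_type G n g C k * k" by simp
        then show ?thesis using tc[OF C] by simp
      next
        case False
        have "Jset G {1..n} g C k = {}"
        proof (rule ccontr)
          assume "Jset G {1..n} g C k \<noteq> {}"
          then obtain j where j: "j \<in> {1..n}" "card (perm_cycle (snd g) j) = k" unfolding Jset_def by auto
          obtain F \<sigma> where g: "g = (F, \<sigma>)" by (cases g)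
          have sp: "\<sigma> permutes {1..n}" using gc g by (simp add: wrA_carrier)
          have "perm_cycle \<sigma> j \<subseteq> {1..n}" by (rule perm_cycle_subset[OF sp j(1)])
          then have "card (perm_cycle \<sigma> j) \<le> n" using card_mono[OF fin] by fastforce
          then show False using j(2) g False by simp
        qed
        then show ?thesis by simp
      qed
    qed
    show "\<exists>h\<in>carrier (wrA G {1..n}). h [^]\<^bsub>wrA G {1..n}\<^esub> r = g"
      by (rule backward[OF assms(2,3,4) fin gc cond])
  qed
qed


end
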